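(* Let $p$ be an odd prime and let $L$ be a $\mathbb{Z}_p$-lattice of rank $k\ge 4$ with $L\simeq\langle \epsilon_1,p^{e_2}\epsilon_2,p^{e_3}\epsilon_3,\dots,p^{e_k}\epsilon_k\rangle$, where $0\le e_2\le e_3\le\cdots\le e_k$ and $\epsilon_i\in\mathbb{Z}_p^\times$. If $\nu_p(\langle\epsilon_1,p^{e_2}\epsilon_2,p^{e_3}\epsilon_3\rangle)<\infty$ (i.e., this ternary lattice is isotropic), then $\nu_p(L)\le \nu'_p(L)+1$.
   Context: $\langle a_1,\dots,a_k\rangle$ denotes the $\mathbb{Z}_p$-lattice with diagonal Gram matrix $\mathrm{diag}(a_1,\dots,a_k)$; $Q(\mathbf x)=B(\mathbf x,\mathbf x)$; $a$ is represented by $L$ if $a=Q(\mathbf x)$ for some $\mathbf x\in L$. For odd $p$, $SC_p=\{1,\Delta_p,p,p\Delta_p\}$ with $\Delta_p$ a non-square unit. For $L$ of rank $\ge4$ (or an isotropic ternary lattice) and $s\in SC_p$, let $u\ge0$ be least with $sp^{2u}$ represented by $L$; $\nu_{p,s}(L)=\mathrm{ord}_p(sp^{2u})$; $\nu_p(L)=\max_{s}\nu_{p,s}(L)$; $\nu'_p(L)=\max\{\nu_{p,s}(L): s\in SC_p\setminus\{s_0\}\}$ for any $s_0$ with $\nu_{p,s_0}(L)=\nu_p(L)$. For an anisotropic ternary $\mathbb{Z}_p$-lattice $K$ one sets $\nu_p(K)=\infty$. *)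

theory Defs
  imports Main "HOL-Computational_Algebra.Primes"
begin

text \<open>The p-adic integers Z_p, modelled as the inverse limit of the rings Z/p^n Z:
  an element is a coherent sequence x with x n in [0, p^n) and x (n+1) = x n mod p^n.\<close>

definition zp :: "nat \<Rightarrow> (nat \<Rightarrow> int) set" where
  "zp p = {x. \<forall>n. 0 \<le> x n \<and> x n < int p ^ n \<and> x (Suc n) mod (int p ^ n) = x n}"

definition zp_of_int :: "nat \<Rightarrow> int \<Rightarrow> (nat \<Rightarrow> int)" where
  "zp_of_int p a = (\<lambda>n. a mod (int p ^ n))"

definition zp_zero :: "nat \<Rightarrow> int" where
  "zp_zero = (\<lambda>n. 0)"

definition zp_mult :: "nat \<Rightarrow> (nat \<Rightarrow> int) \<Rightarrow> (nat \<Rightarrow> int) \<Rightarrow> (nat \<Rightarrow> int)" where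
  "zp_mult p x y = (\<lambda>n. (x n * y n) mod (int p ^ n))"

definition zp_unit :: "nat \<Rightarrow> (nat \<Rightarrow> int) \<Rightarrow> bool" where
  "zp_unit p x \<longleftrightarrow> x \<in> zp p \<and> x 1 \<noteq> 0"

definition zp_square :: "nat \<Rightarrow> (nat \<Rightarrow> int) \<Rightarrow> bool" where
  "zp_square p x \<longleftrightarrow> (\<exists>y \<in> zp p. x = zp_mult p y y)"

definition zp_nonsquare_unit :: "nat \<Rightarrow> (nat \<Rightarrow> int) \<Rightarrow> bool" where
  "zp_nonsquare_unit p d \<longleftrightarrow> zp_unit p d \<and> \<not> zp_square p d"

definition zp_ord :: "nat \<Rightarrow> (nat \<Rightarrow> int) \<Rightarrow> nat" where
  "zp_ord p x = (LEAST n. x (Suc n) \<noteq> 0)"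

definition qf :: "nat \<Rightarrow> (nat \<Rightarrow> int) list \<Rightarrow> (nat \<Rightarrow> int) list \<Rightarrow> (nat \<Rightarrow> int)" where
  "qf p as xs = (\<lambda>n. (\<Sum>i<length as. (as ! i) n * ((xs ! i) n)^2) mod (int p ^ n))"

definition zp_rep :: "nat \<Rightarrow> (nat \<Rightarrow> int) list \<Rightarrow> (nat \<Rightarrow> int) \<Rightarrow> bool" where
  "zp_rep p as a \<longleftrightarrow> (\<exists>xs. length xs = length as \<and> set xs \<subseteq> zp p \<and> qf p as xs = a)"

definition zp_isotropic :: "nat \<Rightarrow> (nat \<Rightarrow> int) list \<Rightarrow> bool" where
  "zp_isotropic p as \<longleftrightarrow> (\<exists>xs. length xs = length as \<and> set xs \<subseteq> zp p \<and>
      qf p as xs = zp_zero \<and> (\<exists>x \<in> set xs. x \<noteq> zp_zero))"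

definition SC :: "nat \<Rightarrow> (nat \<Rightarrow> int) \<Rightarrow> (nat \<Rightarrow> int) set" where
  "SC p d = {zp_of_int p 1, d, zp_of_int p (int p), zp_mult p (zp_of_int p (int p)) d}"

definition nu_s :: "nat \<Rightarrow> (nat \<Rightarrow> int) list \<Rightarrow> (nat \<Rightarrow> int) \<Rightarrow> nat" where
  "nu_s p as s = (let u = (LEAST u. zp_rep p as (zp_mult p s (zp_of_int p (int p ^ (2*u)))))
                  in zp_ord p (zp_mult p s (zp_of_int p (int p ^ (2*u)))))"

definition nu :: "nat \<Rightarrow> (nat \<Rightarrow> int) \<Rightarrow> (nat \<Rightarrow> int) list \<Rightarrow> nat" where
  "nu p d as = Max (nu_s p as ` SC p d)"

definition nu' :: "nat \<Rightarrow> (nat \<Rightarrow> int) \<Rightarrow> (nat \<Rightarrow> int) list \<Rightarrow> nat" where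
  "nu' p d as = (let s0 = (SOME s. s \<in> SC p d \<and> nu_s p as s = nu p d as)
                 in Max (nu_s p as ` (SC p d - {s0})))"

end

theory Submission
  imports Defs "HOL-Number_Theory.Cong"
begin


lemma zp_range: "x \<in> zp p \<Longrightarrow> 0 \<le> x n \<and> x n < int p ^ n"
  by (simp add: zp_def)

lemma zp_mod_self: "x \<in> zp p \<Longrightarrow> x n mod int p ^ n = x n"
  using zp_range[of x p n] by simp

lemma zp_coh: assumes "x \<in> zp p" "n \<le> m" shows "x m mod (int p ^ n) = x n"
  using assms(2)
proof (induction m)
  case 0 then show ?case using zp_range[OF assms(1), of 0] by simp
next
  case (Suc m)
  show ?case
  proof (cases "n = Suc m")
    case True then show ?thesis using zp_mod_self[OF assms(1), of "Suc m"] by simp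
  next
    case False
    then have "n \<le> m" using Suc by simp
    have d: "int p ^ n dvd int p ^ m" using \<open>n \<le> m\<close> by (simp add: le_imp_power_dvd)
    have "x (Suc m) mod int p ^ n = (x (Suc m) mod int p ^ m) mod int p ^ n"
      using d by (simp add: mod_mod_cancel)
    also have "\<dots> = x m mod int p ^ n" using assms(1) by (simp add: zp_def)
    finally show ?thesis using Suc.IH[OF \<open>n \<le> m\<close>] by simp
  qed
qed

lemma zp_cong: "x \<in> zp p \<Longrightarrow> n \<le> m \<Longrightarrow> [x m = x n] (mod int p ^ n)"
  using zp_coh unfolding cong_def by (metis zp_mod_self)

definition cohs :: "nat \<Rightarrow> (nat \<Rightarrow> int) \<Rightarrow> bool" where
  "cohs p f \<longleftrightarrow> (\<forall>n. [f (Suc n) = f n] (mod int p ^ n))"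

lemma cohs_le: assumes "cohs p f" "n \<le> m" shows "[f m = f n] (mod int p ^ n)"
  using assms(2)
proof (induction m)
  case 0 then show ?case by simp
next
  case (Suc m)
  show ?case
  proof (cases "n = Suc m")
    case True then show ?thesis by simp
  next
    case False
    then have "n \<le> m" using Suc by simp
    have "[f (Suc m) = f m] (mod int p ^ m)" using assms(1) by (simp add: cohs_def)
    then have "[f (Suc m) = f m] (mod int p ^ n)"
      by (rule cong_dvd_modulus) (simp add: \<open>n \<le> m\<close> le_imp_power_dvd)
    then show ?thesis using Suc.IH[OF \<open>n \<le> m\<close>] by (rule cong_trans)
  qed
qed

lemma mk_zp: assumes "cohs p f" "p > 0" shows "(\<lambda>n. f n mod int p ^ n) \<in> zp p"
  unfolding zp_def
proof (safe)
  fix n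
  show "0 \<le> f n mod int p ^ n" using assms(2) by simp
  show "f n mod int p ^ n < int p ^ n" using assms(2) by simp
  have "[f (Suc n) = f n] (mod int p ^ n)" using assms(1) by (simp add: cohs_def)
  then show "f (Suc n) mod int p ^ Suc n mod int p ^ n = f n mod int p ^ n"
    by (simp add: cong_def mod_mod_cancel le_imp_power_dvd)
qed

lemma zp_cohs: "x \<in> zp p \<Longrightarrow> cohs p x"
  unfolding cohs_def using zp_cong by (metis le_SucE order_refl le_Suc_eq)

lemma cohs_const: "cohs p (\<lambda>n. c)" by (simp add: cohs_def)
lemma cohs_add: "cohs p f \<Longrightarrow> cohs p g \<Longrightarrow> cohs p (\<lambda>n. f n + g n)"
  by (simp add: cohs_def cong_add)
lemma cohs_diff: "cohs p f \<Longrightarrow> cohs p g \<Longrightarrow> cohs p (\<lambda>n. f n - g n)"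
  by (simp add: cohs_def cong_diff)
lemma cohs_mult: "cohs p f \<Longrightarrow> cohs p g \<Longrightarrow> cohs p (\<lambda>n. f n * g n)"
  by (simp add: cohs_def cong_mult)
lemma cohs_uminus: "cohs p f \<Longrightarrow> cohs p (\<lambda>n. - f n)"
  by (simp add: cohs_def cong_uminus)
lemma cohs_mod: "cohs p f \<Longrightarrow> cohs p (\<lambda>n. f n mod int p ^ n)"
  unfolding cohs_def
  by (metis cong_mod_left cong_mod_right mod_mult_cong_right power_Suc2)

lemma cohs_cong: "cohs p g \<Longrightarrow> (\<And>n. [f n = g n] (mod int p ^ n)) \<Longrightarrow> cohs p f"
  unfolding cohs_def
proof
  fix n assume a: "\<forall>n. [g (Suc n) = g n] (mod int p ^ n)" and b: "\<And>n. [f n = g n] (mod int p ^ n)"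
  have "[f (Suc n) = g (Suc n)] (mod int p ^ n)"
    using b[of "Suc n"] by (rule cong_dvd_modulus) simp
  also have "[g (Suc n) = g n] (mod int p ^ n)" using a by simp
  also have "[g n = f n] (mod int p ^ n)" using b[of n] by (simp add: cong_sym)
  finally show "[f (Suc n) = f n] (mod int p ^ n)" .
qed

lemma zp_eqI: "x \<in> zp p \<Longrightarrow> y \<in> zp p \<Longrightarrow> (\<And>n. [x n = y n] (mod int p ^ n)) \<Longrightarrow> x = y"
  by (metis cong_def ext zp_mod_self)

lemma zp_of_int_zp: "p > 0 \<Longrightarrow> zp_of_int p a \<in> zp p"
  using mk_zp[OF cohs_const, of p a] by (simp add: zp_of_int_def)

lemma zp_mult_zp: "p > 0 \<Longrightarrow> x \<in> zp p \<Longrightarrow> y \<in> zp p \<Longrightarrow> zp_mult p x y \<in> zp p"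
  unfolding zp_mult_def by (rule mk_zp[OF cohs_mult[OF zp_cohs zp_cohs]])


lemma uniq_seq:
  fixes P :: "nat \<Rightarrow> int \<Rightarrow> bool"
  assumes p: "p > 0"
    and ex: "\<And>n. \<exists>!z. 0 \<le> z \<and> z < int p ^ n \<and> P n z"
    and down: "\<And>n z. P (Suc n) z \<Longrightarrow> P n (z mod int p ^ n)"
  shows "\<exists>s \<in> zp p. \<forall>n. P n (s n)"
proof -
  define s where "s n = (THE z. 0 \<le> z \<and> z < int p ^ n \<and> P n z)" for n
  have s: "0 \<le> s n \<and> s n < int p ^ n \<and> P n (s n)" for n
    unfolding s_def by (rule theI'[OF ex])
  have "s (Suc n) mod int p ^ n = s n" for n
  proof -
    have "0 \<le> s (Suc n) mod int p ^ n \<and> s (Suc n) mod int p ^ n < int p ^ n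
          \<and> P n (s (Suc n) mod int p ^ n)" using p down s[of "Suc n"] by simp
    then show ?thesis using ex[of n] s[of n] by blast
  qed
  then have "s \<in> zp p" using s by (simp add: zp_def)
  then show ?thesis using s by blast
qed

lemma unit_ndvd: assumes "x \<in> zp p" "x 1 \<noteq> 0" "n \<ge> 1" shows "\<not> int p dvd x n"
proof
  assume "int p dvd x n"
  then have "x n mod int p ^ 1 = 0" by simp
  then show False using zp_coh[OF assms(1) assms(3)] assms(2) by simp
qed

lemma unit_coprime: assumes "prime p" "x \<in> zp p" "x 1 \<noteq> 0" shows "coprime (x n) (int p ^ n)"
proof (cases "n = 0")
  case True then show ?thesis by simp
next
  case False
  then have "\<not> int p dvd x n" using unit_ndvd assms by simp
  then have "coprime (int p) (x n)" using assms(1) by (simp add: prime_imp_coprime)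
  then show ?thesis by (simp add: coprime_commute)
qed

lemma zp_inverse:
  assumes "prime p" "x \<in> zp p" "x 1 \<noteq> 0"
  shows "\<exists>y \<in> zp p. \<forall>n. [x n * y n = 1] (mod int p ^ n)"
proof (rule uniq_seq)
  show "p > 0" using assms(1) prime_gt_0_nat by blast
  then have pp: "int p ^ n > 0" for n by simp
  fix n
  have cop: "coprime (x n) (int p ^ n)" by (rule unit_coprime[OF assms])
  obtain z where z: "[x n * z = 1] (mod int p ^ n)" using cong_solve_coprime_int[OF cop] by blast
  have z': "[x n * (z mod int p ^ n) = 1] (mod int p ^ n)"
    using z by (simp add: cong_def mod_mult_right_eq)
  show "\<exists>!z. 0 \<le> z \<and> z < int p ^ n \<and> [x n * z = 1] (mod int p ^ n)"
  proof (rule ex1I[of _ "z mod int p ^ n"])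
    show "0 \<le> z mod int p ^ n \<and> z mod int p ^ n < int p ^ n \<and> [x n * (z mod int p ^ n) = 1] (mod int p ^ n)"
      using pp[of n] z' by simp
  next
    fix w assume w: "0 \<le> w \<and> w < int p ^ n \<and> [x n * w = 1] (mod int p ^ n)"
    have "[x n * w = x n * (z mod int p ^ n)] (mod int p ^ n)"
      using w z' cong_sym cong_trans by blast
    then have "[w = z mod int p ^ n] (mod int p ^ n)" using cong_mult_lcancel[OF cop] by blast
    then show "w = z mod int p ^ n" by (metis cong_def w mod_mod_trivial mod_pos_pos_trivial)
  qed
next
  fix n z assume "[x (Suc n) * z = 1] (mod int p ^ Suc n)"
  then have a: "[x (Suc n) * z = 1] (mod int p ^ n)" by (rule cong_dvd_modulus) simp
  have "[x (Suc n) = x n] (mod int p ^ n)" using zp_cong[OF assms(2)] by simp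
  then have "[x (Suc n) * z = x n * (z mod int p ^ n)] (mod int p ^ n)"
    by (simp add: cong_mult)
  then show "[x n * (z mod int p ^ n) = 1] (mod int p ^ n)"
    using a cong_sym cong_trans by blast
qed


lemma zp_divpow:
  assumes "p > 0" "y \<in> zp p" "y e = 0"
  shows "cohs p (\<lambda>n. y (n + e) div int p ^ e)"
    and "\<And>n. [int p ^ e * (y (n + e) div int p ^ e) = y n] (mod int p ^ n)"
proof -
  have dv: "int p ^ e dvd y (n + e)" for n
    using zp_coh[OF assms(2), of e "n+e"] assms(3) by (simp add: dvd_eq_mod_eq_0)
  have eq: "int p ^ e * (y (n + e) div int p ^ e) = y (n + e)" for n
    using dv[of n] by simp
  show c: "[int p ^ e * (y (n + e) div int p ^ e) = y n] (mod int p ^ n)" for n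
    unfolding eq using zp_cong[OF assms(2), of n "n+e"] by simp
  show "cohs p (\<lambda>n. y (n + e) div int p ^ e)"
    unfolding cohs_def
  proof
    fix n
    have "[y (Suc n + e) = y (n + e)] (mod int p ^ (n + e))"
      using zp_cong[OF assms(2), of "n+e" "Suc n + e"] by simp
    then have "[int p ^ e * (y (Suc n + e) div int p ^ e) = int p ^ e * (y (n + e) div int p ^ e)] (mod int p ^ e * int p ^ n)"
      unfolding eq by (simp add: power_add mult.commute)
    then show "[y (Suc n + e) div int p ^ e = y (n + e) div int p ^ e] (mod int p ^ n)"
      using assms(1) cong_mult_lcancel by (simp add: cong_def)
  qed
qed

lemma ndvd_coprime_pow: assumes "prime p" "\<not> int p dvd x" shows "coprime x (int p ^ n)"
proof -
  have "coprime (int p) x" using assms by (intro prime_imp_coprime) simp_all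
  then show ?thesis by (simp add: coprime_commute)
qed

lemma p_ndvd_2: assumes "prime p" "odd p" shows "\<not> int p dvd 2"
proof
  assume "int p dvd 2" then have "p dvd 2" by presburger
  then have "p \<le> 2" by (simp add: dvd_imp_le)
  moreover have "p \<ge> 2" using assms(1) prime_ge_2_nat by blast
  ultimately have "p = 2" by simp
  then show False using assms(2) by simp
qed

lemma p_ndvd_mult: assumes "prime p" "\<not> int p dvd a" "\<not> int p dvd b" shows "\<not> int p dvd a * b"
  using assms by (metis prime_dvd_mult_iff prime_nat_int_transfer)

lemma mod_pow_cong_p: assumes "n \<ge> 1" shows "[z mod int p ^ n = z] (mod int p)"
proof -
  have "[z mod int p ^ n = z] (mod int p ^ n)" by (simp add: cong_def)
  moreover have "int p dvd int p ^ n" using assms by (simp add: dvd_power)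
  ultimately show ?thesis by (rule cong_dvd_modulus)
qed


lemma sq_diff_fact: "a ^ 2 - b ^ 2 = (a + b) * (a - (b::int))"
  by (simp add: algebra_simps power2_eq_square)
lemma zp_sqrt:
  assumes pr: "prime p" and od: "odd p" and c: "c \<in> zp p"
    and r1: "[r1 ^ 2 = c 1] (mod int p)" and nd: "\<not> int p dvd r1"
  shows "\<exists>r \<in> zp p. \<forall>n. [r n ^ 2 = c n] (mod int p ^ n)"
proof -
  define P where "P n z \<longleftrightarrow> [z ^ 2 = c n] (mod int p ^ n) \<and> (n \<ge> 1 \<longrightarrow> [z = r1] (mod int p))" for n z
  have p0: "p > 0" using pr prime_gt_0_nat by blast
  have pp: "int p ^ n > 0" for n using p0 by simp
  have nd2: "\<not> int p dvd 2 * z" if "[z = r1] (mod int p)" for z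
  proof -
    have "\<not> int p dvd z" using nd that cong_dvd_iff by blast
    then show ?thesis using p_ndvd_mult[OF pr p_ndvd_2[OF pr od]] by blast
  qed
  have ex: "\<exists>z. P n z" for n
  proof (induction n)
    case 0 show ?case by (simp add: P_def)
  next
    case (Suc n)
    show ?case
    proof (cases "n = 0")
      case True
      have "P (Suc 0) r1" using r1 by (simp add: P_def)
      then show ?thesis using True by blast
    next
      case False
      obtain z where z: "P n z" using Suc.IH by blast
      have zr: "[z = r1] (mod int p)" using z False by (simp add: P_def)
      have "[c (Suc n) = c n] (mod int p ^ n)" using zp_cong[OF c] by simp
      then have "[c (Suc n) = z ^ 2] (mod int p ^ n)" using z by (meson P_def cong_sym cong_trans)
      then have "int p ^ n dvd c (Suc n) - z ^ 2" by (simp add: cong_iff_dvd_diff)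
      then obtain h where h: "c (Suc n) - z ^ 2 = int p ^ n * h" by blast
      have "coprime (2 * z) (int p ^ 1)" by (rule ndvd_coprime_pow[OF pr nd2[OF zr]])
      then have "coprime (2 * z) (int p)" by simp
      then obtain t0 where t0: "[2 * z * t0 = 1] (mod int p)"
        using cong_solve_coprime_int by blast
      define t where "t = t0 * h"
      have t: "[2 * z * t = h] (mod int p)" unfolding t_def
        using cong_scalar_right[OF t0, of h] by (simp add: ac_simps)
      define z' where "z' = z + int p ^ n * t"
      have h': "c (Suc n) = z * z + int p ^ n * h" using h by (simp add: power2_eq_square)
      have "z' ^ 2 - c (Suc n) = int p ^ n * (2 * z * t - h) + (int p ^ n * int p ^ n) * t ^ 2"
        unfolding z'_def power2_eq_square h' by (simp add: algebra_simps)
      moreover have "int p ^ Suc n dvd int p ^ n * (2 * z * t - h)"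
        using t by (simp add: cong_iff_dvd_diff mult_dvd_mono)
      moreover have "int p ^ Suc n dvd (int p ^ n * int p ^ n) * t ^ 2"
      proof -
        have "int p ^ Suc n dvd int p ^ (n + n)" using False by (intro le_imp_power_dvd) simp
        then show ?thesis by (simp add: power_add)
      qed
      ultimately have "int p ^ Suc n dvd z' ^ 2 - c (Suc n)" by simp
      then have A: "[z' ^ 2 = c (Suc n)] (mod int p ^ Suc n)" by (simp add: cong_iff_dvd_diff)
      have "int p dvd int p ^ n * t" using False by (simp add: dvd_power)
      then have "[z' = z] (mod int p)" unfolding z'_def by (simp add: cong_iff_dvd_diff)
      then have "[z' = r1] (mod int p)" using zr cong_trans by blast
      then show ?thesis using A by (auto simp: P_def)
    qed
  qed
  have "\<exists>r \<in> zp p. \<forall>n. P n (r n)"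
  proof (rule uniq_seq[OF p0])
    fix n
    obtain z where z: "P n z" using ex by blast
    have zm: "P n (z mod int p ^ n)"
    proof -
      have "[(z mod int p ^ n) ^ 2 = z ^ 2] (mod int p ^ n)"
        by (simp add: cong_def power_mod)
      moreover have "n \<ge> 1 \<Longrightarrow> [z mod int p ^ n = z] (mod int p)" by (rule mod_pow_cong_p)
      ultimately show ?thesis using z unfolding P_def by (meson cong_trans)
    qed
    show "\<exists>!z. 0 \<le> z \<and> z < int p ^ n \<and> P n z"
    proof (rule ex1I[of _ "z mod int p ^ n"])
      show "0 \<le> z mod int p ^ n \<and> z mod int p ^ n < int p ^ n \<and> P n (z mod int p ^ n)"
        using zm pp[of n] by simp
    next
      fix w assume w: "0 \<le> w \<and> w < int p ^ n \<and> P n w"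
      show "w = z mod int p ^ n"
      proof (cases "n = 0")
        case True then show ?thesis using w by simp
      next
        case False
        let ?v = "z mod int p ^ n"
        have "[w ^ 2 = ?v ^ 2] (mod int p ^ n)" using w zm unfolding P_def
          by (meson cong_sym cong_trans)
        then have "int p ^ n dvd w ^ 2 - ?v ^ 2" by (simp add: cong_iff_dvd_diff)
        then have "int p ^ n dvd (w + ?v) * (w - ?v)" by (simp only: sq_diff_fact)
        moreover
        have w1: "[w = r1] (mod int p)" "[?v = r1] (mod int p)" using w zm False unfolding P_def by auto
        have "[w + ?v = r1 + r1] (mod int p)" using cong_add[OF w1] .
        then have "[w + ?v = 2 * r1] (mod int p)" by (simp only: mult_2)
        then have "\<not> int p dvd w + ?v" using nd2[of r1] cong_dvd_iff by (metis cong_refl)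
        then have "coprime (w + ?v) (int p ^ n)" by (rule ndvd_coprime_pow[OF pr])
        ultimately have "int p ^ n dvd w - ?v"
          by (metis coprime_commute coprime_dvd_mult_right_iff)
        then have "[w = ?v] (mod int p ^ n)" by (simp add: cong_iff_dvd_diff)
        then show ?thesis using w pp[of n] by (metis cong_def mod_mod_trivial mod_pos_pos_trivial)
      qed
    qed
  next
    fix n z assume "P (Suc n) z"
    then have a: "[z ^ 2 = c (Suc n)] (mod int p ^ Suc n)" "[z = r1] (mod int p)" by (auto simp: P_def)
    have "[(z mod int p ^ n) ^ 2 = z ^ 2] (mod int p ^ n)" by (simp add: cong_def power_mod)
    also have "[z ^ 2 = c (Suc n)] (mod int p ^ n)" using a(1) by (rule cong_dvd_modulus) simp
    also have "[c (Suc n) = c n] (mod int p ^ n)" using zp_cong[OF c] by simp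
    finally have A: "[(z mod int p ^ n) ^ 2 = c n] (mod int p ^ n)" .
    have "n \<ge> 1 \<Longrightarrow> [z mod int p ^ n = z] (mod int p)" by (rule mod_pow_cong_p)
    then show "P n (z mod int p ^ n)" using A a(2) unfolding P_def by (meson cong_trans)
  qed
  then show ?thesis unfolding P_def by blast
qed


lemma mkz_unit:
  assumes "prime p" "cohs p f" "\<not> int p dvd f 1"
  shows "(\<lambda>n. f n mod int p ^ n) \<in> zp p" "(\<lambda>n. f n mod int p ^ n) 1 \<noteq> 0"
proof -
  have p0: "p > 0" using assms(1) prime_gt_0_nat by blast
  show "(\<lambda>n. f n mod int p ^ n) \<in> zp p" by (rule mk_zp[OF assms(2) p0])
  show "(\<lambda>n. f n mod int p ^ n) 1 \<noteq> 0" using assms(3) by (simp add: dvd_eq_mod_eq_0)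
qed

lemma zp_ndvd1: "x \<in> zp p \<Longrightarrow> x 1 \<noteq> 0 \<Longrightarrow> \<not> int p dvd x 1"
  using unit_ndvd by blast

lemma sum_sq_delta:
  fixes A v :: "nat \<Rightarrow> int"
  assumes "j \<in> S" "finite S"
  shows "(\<Sum>i\<in>S. A i * (t * v i + (if i = j then 1 else 0)) ^ 2)
       = t ^ 2 * (\<Sum>i\<in>S. A i * v i ^ 2) + A j * (2 * t * v j + 1)"
proof -
  have "(\<Sum>i\<in>S. A i * (t * v i + (if i = j then 1 else 0)) ^ 2)
      = (\<Sum>i\<in>S. t ^ 2 * (A i * v i ^ 2) + (if i = j then A i * (2 * t * v i + 1) else 0))"
    by (rule sum.cong) (auto simp: power2_eq_square algebra_simps)
  also have "\<dots> = t ^ 2 * (\<Sum>i\<in>S. A i * v i ^ 2) + A j * (2 * t * v j + 1)"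
    using assms by (simp add: sum.distrib sum_distrib_left)
  finally show ?thesis .
qed

lemma cong_modsq: "[a * (b mod m) ^ 2 = a * b ^ 2] (mod m)" for a b m :: int
  by (intro cong_scalar_left cong_pow) (simp add: cong_def)

lemma rep_lin:
  assumes pr: "prime p" and od: "odd p"
    and len: "length vs = length as" and vz: "set vs \<subseteq> zp p" and az: "set as \<subseteq> zp p"
    and iso: "\<And>n. [(\<Sum>i<length as. (as!i) n * ((vs!i) n)^2) = 0] (mod int p ^ n)"
    and j: "j < length as" and Aj: "as!j = zp_mult p (zp_of_int p (int p ^ e)) eps"
    and epsu: "zp_unit p eps" and vj: "(vs!j) 1 \<noteq> 0"
    and y: "y \<in> zp p" and ye: "y e = 0"
  shows "zp_rep p as y"
proof -
  have p0: "p > 0" using pr prime_gt_0_nat by blast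
  have ez: "eps \<in> zp p" and e1: "eps 1 \<noteq> 0" using epsu by (auto simp: zp_unit_def)
  have vjz: "vs!j \<in> zp p" using vz j len by (metis nth_mem subsetD)
  let ?u = "\<lambda>n. 2 * eps n * (vs!j) n"
  have cu: "cohs p ?u" by (intro cohs_mult cohs_const zp_cohs ez vjz)
  have nu1: "\<not> int p dvd ?u 1"
    using p_ndvd_mult[OF pr p_ndvd_mult[OF pr p_ndvd_2[OF pr od] zp_ndvd1[OF ez e1]] zp_ndvd1[OF vjz vj]] .
  obtain I where Iz: "I \<in> zp p" and I: "\<And>n. [(?u n mod int p ^ n) * I n = 1] (mod int p ^ n)"
    using zp_inverse[OF pr mkz_unit[OF pr cu nu1]] by blast
  have I': "[?u n * I n = 1] (mod int p ^ n)" for n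
    using I[of n] by (simp add: cong_def mod_mult_left_eq)
  define y' where "y' n = y (n + e) div int p ^ e" for n
  have cy': "cohs p y'" unfolding y'_def by (rule zp_divpow(1)[OF p0 y ye])
  have yy': "[int p ^ e * y' n = y n] (mod int p ^ n)" for n
    unfolding y'_def by (rule zp_divpow(2)[OF p0 y ye])
  define t where "t n = (y' n - eps n) * I n" for n
  have ct: "cohs p t" unfolding t_def by (intro cohs_mult cohs_diff cy' zp_cohs ez Iz)
  define xs where "xs = map (\<lambda>i. \<lambda>n. (t n * (vs!i) n + (if i = j then 1 else 0)) mod int p ^ n) [0..<length as]"
  have lxs: "length xs = length as" by (simp add: xs_def)
  have xsi: "xs ! i = (\<lambda>n. (t n * (vs!i) n + (if i = j then 1 else 0)) mod int p ^ n)" if "i < length as" for i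
    using that by (simp add: xs_def)
  have xz: "set xs \<subseteq> zp p"
  proof
    fix x assume "x \<in> set xs"
    then obtain i where i: "i < length as" "x = xs ! i" by (metis in_set_conv_nth lxs)
    have viz: "vs!i \<in> zp p" using vz i len by (metis nth_mem subsetD)
    show "x \<in> zp p" unfolding i(2) xsi[OF i(1)]
      by (intro mk_zp[OF _ p0] cohs_add cohs_mult ct zp_cohs viz cohs_const)
  qed
  have "qf p as xs = y"
  proof
    fix n
    let ?q = "int p ^ n"
    have "[(\<Sum>i<length as. (as!i) n * ((xs!i) n)^2)
          = (\<Sum>i<length as. (as!i) n * (t n * (vs!i) n + (if i = j then 1 else 0))^2)] (mod ?q)"
    proof (rule cong_sum)
      fix i assume "i \<in> {..<length as}"
      then have "(xs!i) n = (t n * (vs!i) n + (if i = j then 1 else 0)) mod ?q" using xsi by simp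
      then show "[(as!i) n * ((xs!i) n)^2 = (as!i) n * (t n * (vs!i) n + (if i = j then 1 else 0))^2] (mod ?q)"
        using cong_modsq by metis
    qed
    also have "(\<Sum>i<length as. (as!i) n * (t n * (vs!i) n + (if i = j then 1 else 0))^2)
        = t n ^ 2 * (\<Sum>i<length as. (as!i) n * (vs!i) n ^ 2) + (as!j) n * (2 * t n * (vs!j) n + 1)"
      using sum_sq_delta[of j "{..<length as}" "\<lambda>i. (as!i) n" "t n" "\<lambda>i. (vs!i) n"] j by simp
    also have "[\<dots> = t n ^ 2 * 0 + (int p ^ e * eps n) * (2 * t n * (vs!j) n + 1)] (mod ?q)"
    proof (intro cong_add cong_mult cong_refl iso)
      show "[(as!j) n = int p ^ e * eps n] (mod ?q)" unfolding Aj
        by (simp add: zp_mult_def zp_of_int_def cong_def mod_mult_left_eq)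
    qed
    also have "t n ^ 2 * 0 + (int p ^ e * eps n) * (2 * t n * (vs!j) n + 1)
        = int p ^ e * ((?u n * I n) * (y' n - eps n) + eps n)"
      by (simp add: t_def algebra_simps)
    also have "[\<dots> = int p ^ e * (1 * (y' n - eps n) + eps n)] (mod ?q)"
      by (intro cong_mult cong_add cong_refl I')
    also have "int p ^ e * (1 * (y' n - eps n) + eps n) = int p ^ e * y' n" by simp
    also have "[\<dots> = y n] (mod ?q)" by (rule yy')
    finally have "[(\<Sum>i<length as. (as!i) n * ((xs!i) n)^2) = y n] (mod ?q)" .
    then show "qf p as xs n = y n"
      unfolding qf_def using zp_mod_self[OF y] by (simp add: cong_def)
  qed
  then show ?thesis unfolding zp_rep_def using lxs xz by blast
qed


lemma sq_cong_scaled: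
  fixes x w q :: int
  assumes "q ^ (n + m) dvd x - q ^ m * w"
  shows "q ^ (n + 2*m) dvd x ^ 2 - q ^ (2*m) * w ^ 2"
proof -
  have e1: "q ^ (2*m) * w ^ 2 = (q ^ m * w) ^ 2" by (simp add: power_mult_distrib power_mult mult.commute)
  have e2: "x ^ 2 - (q ^ m * w) ^ 2 = (x - q ^ m * w) * (x + q ^ m * w)"
    using sq_diff_fact[of x "q ^ m * w"] by (simp add: mult.commute)
  have d2: "q ^ m dvd x + q ^ m * w"
  proof -
    have "q ^ m dvd q ^ (n + m)" by (simp add: le_imp_power_dvd)
    then have "q ^ m dvd x - q ^ m * w" using assms dvd_trans by blast
    then have "q ^ m dvd (x - q ^ m * w) + 2 * (q ^ m * w)" by (intro dvd_add) simp_all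
    moreover have "(x - q ^ m * w) + 2 * (q ^ m * w) = x + q ^ m * w" by simp
    ultimately show ?thesis by simp
  qed
  have "q ^ (n + m) * q ^ m dvd (x - q ^ m * w) * (x + q ^ m * w)"
    using mult_dvd_mono[OF assms d2] .
  moreover have "q ^ (n + 2*m) = q ^ (n + m) * q ^ m"
    by (metis power_add add.assoc mult_2)
  ultimately show ?thesis unfolding e1 e2 by simp
qed

lemma cong_scale_mod: "[a = b] (mod q) \<Longrightarrow> [c * a = c * b] (mod c * q)" for a b c q :: int
  by (simp add: cong_iff_dvd_diff right_diff_distrib[symmetric] mult_dvd_mono)


lemma term_scale:
  assumes x: "x \<in> zp p" and b: "b \<in> zp p" and pw: "int p ^ m * w = x (n + m)"
  shows "[b (n + 2*m) * (x (n + 2*m))^2 = int p ^ (2*m) * (b n * w^2)] (mod int p ^ (n + 2*m))"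
proof -
  let ?N = "n + 2*m"
  have eqN: "int p ^ (2*m) * int p ^ n = int p ^ ?N" by (simp add: power_add mult.commute)
  have "[x ?N = x (n + m)] (mod int p ^ (n + m))" using zp_cong[OF x, of "n+m" ?N] by simp
  then have "int p ^ (n + m) dvd x ?N - int p ^ m * w"
    unfolding pw cong_iff_dvd_diff .
  then have "int p ^ ?N dvd (x ?N)^2 - int p ^ (2*m) * w^2" by (rule sq_cong_scaled)
  then have "[(x ?N)^2 = int p ^ (2*m) * w^2] (mod int p ^ ?N)"
    by (simp only: cong_iff_dvd_diff)
  then have A: "[b ?N * (x ?N)^2 = b ?N * (int p ^ (2*m) * w^2)] (mod int p ^ ?N)"
    by (rule cong_scalar_left)
  have "[b ?N = b n] (mod int p ^ n)" using zp_cong[OF b, of n ?N] by simp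
  then have "[int p ^ (2*m) * b ?N = int p ^ (2*m) * b n] (mod int p ^ (2*m) * int p ^ n)"
    by (rule cong_scale_mod)
  then have "[int p ^ (2*m) * b ?N = int p ^ (2*m) * b n] (mod int p ^ ?N)"
    unfolding eqN .
  then have B: "[int p ^ (2*m) * b ?N * w^2 = int p ^ (2*m) * b n * w^2] (mod int p ^ ?N)"
    by (rule cong_scalar_right)
  have e1: "b ?N * (int p ^ (2*m) * w^2) = int p ^ (2*m) * b ?N * w^2" by (simp only: ac_simps)
  have e2: "int p ^ (2*m) * b n * w^2 = int p ^ (2*m) * (b n * w^2)" by (simp only: ac_simps)
  show ?thesis using A B unfolding e1 e2 by (rule cong_trans)
qed


lemma cong_cancel_scale: "c \<noteq> 0 \<Longrightarrow> [c*a = c*b] (mod c*q) \<Longrightarrow> [a = b] (mod q)" for a b c q :: int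
  by (simp add: cong_iff_dvd_diff right_diff_distrib[symmetric])

lemma prim_iso:
  assumes pr: "prime p" and bz: "set bs \<subseteq> zp p" and iso: "zp_isotropic p bs"
  shows "\<exists>vs. length vs = length bs \<and> set vs \<subseteq> zp p
     \<and> (\<forall>n. [(\<Sum>i<length bs. (bs!i) n * ((vs!i) n)^2) = 0] (mod int p ^ n))
     \<and> (\<exists>j<length bs. (vs!j) 1 \<noteq> 0)"
proof -
  have p0: "p > 0" using pr prime_gt_0_nat by blast
  obtain xs where lx: "length xs = length bs" and xz: "set xs \<subseteq> zp p"
    and q0: "qf p bs xs = zp_zero" and nz: "\<exists>x\<in>set xs. x \<noteq> zp_zero"
    using iso unfolding zp_isotropic_def by blast
  have xiz: "xs!i \<in> zp p" if "i < length bs" for i using xz lx that by (metis nth_mem subsetD)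
  obtain i0 n0 where i0: "i0 < length bs" "(xs!i0) n0 \<noteq> 0"
    using nz lx unfolding zp_zero_def by (metis in_set_conv_nth)
  have "n0 \<noteq> 0"
  proof
    assume "n0 = 0"
    then show False using i0 zp_range[OF xiz[OF i0(1)], of 0] by simp
  qed
  then obtain n1 where "n0 = Suc n1" using not0_implies_Suc by blast
  define m where "m = (LEAST m. \<exists>i<length bs. (xs!i) (Suc m) \<noteq> 0)"
  have exm: "\<exists>i<length bs. (xs!i) (Suc m) \<noteq> 0"
    unfolding m_def by (rule LeastI[of _ n1]) (use i0 \<open>n0 = Suc n1\<close> in blast)
  then obtain j where j: "j < length bs" "(xs!j) (Suc m) \<noteq> 0" by blast
  have xm0: "(xs!i) m = 0" if "i < length bs" for i
  proof (cases m)
    case 0 then show ?thesis using zp_range[OF xiz[OF that], of 0] by simp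
  next
    case (Suc m')
    have "m' < m" using Suc by simp
    then have "\<not> (\<exists>i<length bs. (xs!i) (Suc m') \<noteq> 0)" unfolding m_def by (rule not_less_Least)
    then show ?thesis using that Suc by blast
  qed
  define w where "w i n = (xs!i) (n + m) div int p ^ m" for i n
  have cw: "cohs p (w i)" if "i < length bs" for i
    unfolding w_def by (rule zp_divpow(1)[OF p0 xiz[OF that] xm0[OF that]])
  have pw: "int p ^ m * w i n = (xs!i) (n + m)" if "i < length bs" for i n
  proof -
    have "(xs!i) (n+m) mod int p ^ m = 0" using zp_coh[OF xiz[OF that], of m "n+m"] xm0[OF that] by simp
    then show ?thesis unfolding w_def by (simp add: dvd_eq_mod_eq_0)
  qed
  define vs where "vs = map (\<lambda>i. \<lambda>n. w i n mod int p ^ n) [0..<length bs]"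
  have lv: "length vs = length bs" by (simp add: vs_def)
  have vsi: "vs!i = (\<lambda>n. w i n mod int p ^ n)" if "i < length bs" for i using that by (simp add: vs_def)
  have vz: "set vs \<subseteq> zp p"
  proof
    fix x assume "x \<in> set vs"
    then obtain i where i: "i < length bs" "x = vs ! i" by (metis in_set_conv_nth lv)
    show "x \<in> zp p" unfolding i(2) vsi[OF i(1)] by (rule mk_zp[OF cw[OF i(1)] p0])
  qed
  have "(vs!j) 1 \<noteq> 0"
  proof
    assume a: "(vs!j) 1 = 0"
    have r: "0 \<le> (xs!j) (Suc m)" "(xs!j) (Suc m) < int p ^ Suc m" using zp_range[OF xiz[OF j(1)], of "Suc m"] by (simp_all only:)
    have "w j 1 mod int p = 0" using a vsi[OF j(1)] by simp
    moreover have "0 \<le> w j 1" "w j 1 < int p"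
    proof -
      have e: "int p ^ m * w j 1 = (xs!j) (Suc m)" using pw[OF j(1), of 1] by simp
      have pm: "int p ^ m > 0" using p0 by simp
      show "0 \<le> w j 1" using e r(1) pm by (metis zero_le_mult_iff not_less)
      have "int p ^ Suc m = int p ^ m * int p" by (rule power_Suc2)
      then have "int p ^ m * w j 1 < int p ^ m * int p" using e r(2) by metis
      then show "w j 1 < int p" using pm by simp
    qed
    ultimately have "w j 1 = 0" by simp
    then show False using pw[OF j(1), of 1] j(2) by simp
  qed
  moreover have "[(\<Sum>i<length bs. (bs!i) n * ((vs!i) n)^2) = 0] (mod int p ^ n)" for n
  proof -
    let ?N = "n + 2*m"
    have bz': "bs!i \<in> zp p" if "i < length bs" for i using bz that by (metis nth_mem subsetD)
    have eqN: "int p ^ (2*m) * int p ^ n = int p ^ ?N" by (simp only: power_add[symmetric] add.commute)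
    have Q: "[(\<Sum>i<length bs. (bs!i) ?N * ((xs!i) ?N)^2) = 0] (mod int p ^ ?N)"
      using fun_cong[OF q0, of ?N] unfolding qf_def zp_zero_def lx by (simp add: cong_def)
    have trm: "[(bs!i) ?N * ((xs!i) ?N)^2 = int p ^ (2*m) * ((bs!i) n * (w i n)^2)] (mod int p ^ ?N)"
      if i: "i < length bs" for i
      by (rule term_scale[OF xiz[OF i] bz'[OF i] pw[OF i]])
    have "[int p ^ (2*m) * (\<Sum>i<length bs. (bs!i) n * (w i n)^2) = 0] (mod int p ^ ?N)"
    proof -
      have "[(\<Sum>i<length bs. (bs!i) ?N * ((xs!i) ?N)^2) = (\<Sum>i<length bs. int p ^ (2*m) * ((bs!i) n * (w i n)^2))] (mod int p ^ ?N)"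
      proof (rule cong_sum)
        fix i assume "i \<in> {..<length bs}"
        then have "i < length bs" by simp
        then show "[(bs!i) ?N * ((xs!i) ?N)^2 = int p ^ (2*m) * ((bs!i) n * (w i n)^2)] (mod int p ^ ?N)"
          by (rule trm)
      qed
      moreover have "(\<Sum>i<length bs. int p ^ (2*m) * ((bs!i) n * (w i n)^2)) = int p ^ (2*m) * (\<Sum>i<length bs. (bs!i) n * (w i n)^2)"
        by (simp add: sum_distrib_left)
      ultimately have "[(\<Sum>i<length bs. (bs!i) ?N * ((xs!i) ?N)^2) = int p ^ (2*m) * (\<Sum>i<length bs. (bs!i) n * (w i n)^2)] (mod int p ^ ?N)"
        by simp
      then show ?thesis using Q cong_sym cong_trans by blast
    qed
    then have "[int p ^ (2*m) * (\<Sum>i<length bs. (bs!i) n * (w i n)^2) = int p ^ (2*m) * 0] (mod int p ^ (2*m) * int p ^ n)"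
      unfolding eqN by simp
    moreover have c0: "int p ^ (2*m) \<noteq> 0" using p0 by simp
    ultimately have S: "[(\<Sum>i<length bs. (bs!i) n * (w i n)^2) = 0] (mod int p ^ n)"
      using cong_cancel_scale[OF c0] by blast
    have "[(\<Sum>i<length bs. (bs!i) n * ((vs!i) n)^2) = (\<Sum>i<length bs. (bs!i) n * (w i n)^2)] (mod int p ^ n)"
    proof (rule cong_sum)
      fix i assume "i \<in> {..<length bs}"
      then have "i < length bs" by simp
      then have "(vs!i) n = w i n mod int p ^ n" using vsi[of i] by simp
      then show "[(bs!i) n * ((vs!i) n)^2 = (bs!i) n * (w i n)^2] (mod int p ^ n)"
        using cong_modsq by metis
    qed
    then show ?thesis using S cong_trans by blast
  qed
  ultimately show ?thesis using lv vz j(1) by blast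
qed


definition qr :: "nat \<Rightarrow> int \<Rightarrow> bool" where
  "qr p z \<longleftrightarrow> (\<exists>r. [r^2 = z] (mod int p))"

lemma qr_sq: "qr p (x^2)" unfolding qr_def by (intro exI[of _ x]) simp

lemma qr_cong: "[a = b] (mod int p) \<Longrightarrow> qr p a \<Longrightarrow> qr p b"
  unfolding qr_def using cong_trans by blast

lemma qr_mult: "qr p a \<Longrightarrow> qr p b \<Longrightarrow> qr p (a * b)"
  unfolding qr_def by (metis cong_mult power_mult_distrib)

lemma qr_cancel:
  assumes pr: "prime p" and ab: "qr p (a * b)" and qa: "qr p a" and nd: "\<not> int p dvd a"
  shows "qr p b"
proof -
  obtain r where r: "[r^2 = a] (mod int p)" using qa unfolding qr_def by blast
  obtain s where s: "[s^2 = a * b] (mod int p)" using ab unfolding qr_def by blast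
  have "coprime a (int p)"
    using ndvd_coprime_pow[OF pr nd, of 1] by simp
  then obtain ai where ai: "[a * ai = 1] (mod int p)" using cong_solve_coprime_int by blast
  have "[(s * r * ai)^2 = (a * b) * a * ai ^ 2] (mod int p)"
    using cong_mult[OF cong_mult[OF s r] cong_refl[of "ai^2"]]
    by (simp add: power_mult_distrib)
  also have "(a * b) * a * ai ^ 2 = b * (a * ai) ^ 2" by (simp add: power2_eq_square ac_simps)
  also have "[b * (a * ai) ^ 2 = b * 1 ^ 2] (mod int p)"
    by (intro cong_mult cong_refl cong_pow ai)
  finally show ?thesis unfolding qr_def by auto
qed

lemma cong_pow_p: "[a = b] (mod int p ^ Suc n) \<Longrightarrow> [a = b] (mod int p)"
proof -
  assume a: "[a = b] (mod int p ^ Suc n)"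
  have "int p dvd int p ^ Suc n" unfolding power_Suc by (rule dvd_triv_left)
  with a show ?thesis by (rule cong_dvd_modulus)
qed


lemma p2_step:
  fixes Z w :: int
  assumes pr: "prime p" and nd: "\<not> int p dvd w"
    and c: "[int p ^ 2 * Z = int p ^ n * w] (mod int p ^ Suc n)"
  shows "n \<ge> 2 \<and> [Z = int p ^ (n - 2) * w] (mod int p ^ (n - 1))"
proof -
  have p0: "int p > 0" using pr prime_gt_0_nat by simp
  have cd: "int p ^ Suc n dvd int p ^ 2 * Z - int p ^ n * w" using c by (simp only: cong_iff_dvd_diff)
  show ?thesis
  proof (cases "n \<ge> 2")
    case False
    have "int p ^ Suc n dvd int p ^ 2" using False by (intro le_imp_power_dvd) simp
    then have d1: "int p ^ Suc n dvd int p ^ 2 * Z" by (rule dvd_mult2)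
    have "int p ^ n * w = int p ^ 2 * Z - (int p ^ 2 * Z - int p ^ n * w)" by simp
    then have "int p ^ Suc n dvd int p ^ n * w" using dvd_diff[OF d1 cd] by simp
    then have "int p ^ n * int p dvd int p ^ n * w" by (simp only: power_Suc2)
    then have "int p dvd w" using p0 by simp
    then show ?thesis using nd by blast
  next
    case True
    then obtain m where m: "n = m + 2" by (metis add.commute le_add_diff_inverse)
    have e1: "int p ^ 2 * Z - int p ^ n * w = int p ^ 2 * (Z - int p ^ m * w)"
      unfolding m power_add by (simp only: right_diff_distrib mult.assoc mult.commute)
    have e2: "int p ^ Suc n = int p ^ 2 * int p ^ Suc m" 
      unfolding m by (metis add_Suc add.commute power_add)
    have "int p ^ 2 * int p ^ Suc m dvd int p ^ 2 * (Z - int p ^ m * w)" using cd unfolding e1 e2 .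
    then have "int p ^ Suc m dvd Z - int p ^ m * w" using p0 by simp
    then show ?thesis using m by (simp add: cong_iff_dvd_diff)
  qed
qed


definition ILC :: "nat \<Rightarrow> int \<Rightarrow> int \<Rightarrow> int \<Rightarrow> nat \<Rightarrow> nat \<Rightarrow> bool" where
  "ILC p E1 E2 w a n \<longleftrightarrow> (odd a \<and> even n \<longrightarrow> qr p (w*E1)) \<and> (odd a \<and> odd n \<longrightarrow> qr p (w*E2))
     \<and> (even a \<and> odd n \<longrightarrow> n > a \<and> qr p (-(E1*E2)))"

lemma ILC_shift: assumes "ILC p E1 E2 w a' (n - 2)" "n \<ge> 2" "a' = a \<or> a' + 2 = a"
  shows "ILC p E1 E2 w a n"
proof -
  obtain m where m: "n = m + 2" using assms(2) by (metis add.commute le_add_diff_inverse)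
  have e1: "even n \<longleftrightarrow> even m" "n - 2 = m" unfolding m by simp_all
  have e2: "even a \<longleftrightarrow> even a'" using assms(3) by auto
  have e3: "a' < m \<Longrightarrow> a < n" using assms(3) m by auto
  show ?thesis using assms(1) e1 e2 e3 unfolding ILC_def by auto
qed

lemma cong_cancel_scale2: "c \<noteq> 0 \<Longrightarrow> [c*a = c*b] (mod c*q) \<Longrightarrow> [a = b] (mod q)" for a b c q :: int
  by (simp add: cong_iff_dvd_diff right_diff_distrib[symmetric])

lemma cong_drop0: "[T = 0] (mod m) \<Longrightarrow> [S + T = u] (mod m) \<Longrightarrow> [S = u] (mod m)" for S T u m :: int
  by (metis add.right_neutral cong_add cong_refl cong_sym cong_trans)

lemma ndvd_sq_mult: "prime p \<Longrightarrow> \<not> int p dvd E \<Longrightarrow> \<not> int p dvd X \<Longrightarrow> \<not> int p dvd E * X^2"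
  by (metis p_ndvd_mult power2_eq_square)

lemma IL:
  fixes E1 E2 w :: int
  assumes pr: "prime p" and n1: "\<not> int p dvd E1" and n2: "\<not> int p dvd E2" and nw: "\<not> int p dvd w"
  shows "[E1 * X^2 + int p ^ a * E2 * Y^2 = int p ^ n * w] (mod int p ^ Suc n) \<Longrightarrow> ILC p E1 E2 w a n"
proof (induction n arbitrary: a X Y rule: less_induct)
  case (less n a X Y)
  note H = less.prems
  have Hp: "[E1 * X^2 + int p ^ a * E2 * Y^2 = int p ^ n * w] (mod int p)" using H by (rule cong_pow_p)
  have dpa: "[int p ^ a * E2 * Y^2 = 0] (mod int p)" if "a \<ge> 1" for a :: nat and Y :: int
    using that by (simp add: cong_0_iff dvd_power)
  have dpn: "[int p ^ n * w = 0] (mod int p)" if "n \<ge> 1"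
    using that by (simp add: cong_0_iff dvd_power)
  have red: "ILC p E1 E2 w a n" if "a' = a \<or> a' + 2 = a"
      and eq: "E1 * X^2 + int p ^ a * E2 * Y^2 = int p ^ 2 * (E1 * X'^2 + int p ^ a' * E2 * Y'^2)"
      for a' :: nat and X' Y' :: int
  proof -
    have "[int p ^ 2 * (E1 * X'^2 + int p ^ a' * E2 * Y'^2) = int p ^ n * w] (mod int p ^ Suc n)"
      using H unfolding eq .
    from p2_step[OF pr nw this]
    have n2': "n \<ge> 2" and c: "[E1 * X'^2 + int p ^ a' * E2 * Y'^2 = int p ^ (n - 2) * w] (mod int p ^ Suc (n - 2))"
      by (auto simp: Suc_diff_Suc numeral_2_eq_2)
    have "n - 2 < n" using n2' by simp
    have "ILC p E1 E2 w a' (n - 2)" using less.IH[OF \<open>n - 2 < n\<close> c] .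
    then show ?thesis using ILC_shift n2' that(1) by blast
  qed
  show ?case
  proof (cases "int p dvd X")
    case False
    have nx: "\<not> int p dvd E1 * X^2" by (rule ndvd_sq_mult[OF pr n1 False])
    show ?thesis
    proof (cases "n = 0")
      case True
      show ?thesis unfolding ILC_def
      proof (intro conjI impI)
        assume "odd a \<and> even n"
        then have "a \<ge> 1" by (cases a) auto
        have "[E1 * X^2 = w] (mod int p)" using cong_drop0[OF dpa[OF \<open>a \<ge> 1\<close>]] Hp True by simp
        then have "[(E1 * X)^2 = w * E1] (mod int p)"
          using cong_scalar_right[of "E1 * X^2" w "int p" E1] by (simp add: power2_eq_square ac_simps)
        then show "qr p (w * E1)" unfolding qr_def by blast
      qed (use True in auto)
    next
      case False
      then have n1': "n \<ge> 1" by simp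
      have H0: "[E1 * X^2 + int p ^ a * E2 * Y^2 = 0] (mod int p)" using Hp dpn[OF n1'] cong_trans by blast
      have a0: "a = 0"
      proof (rule ccontr)
        assume "a \<noteq> 0"
        then have "[E1 * X^2 = 0] (mod int p)" using cong_drop0[OF dpa H0] by simp
        then show False using nx by (simp add: cong_0_iff)
      qed
      have "n > a \<and> qr p (- (E1 * E2))"
      proof -
        have H1: "[E1 * X^2 + E2 * Y^2 = 0] (mod int p)" using H0 a0 by simp
        have nY: "\<not> int p dvd Y"
        proof
          assume "int p dvd Y"
          then have "[E2 * Y^2 = 0] (mod int p)" by (simp add: cong_0_iff power2_eq_square)
          then have "[E1 * X^2 = 0] (mod int p)" using cong_drop0 H1 by blast
          then show False using nx by (simp add: cong_0_iff)
        qed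
        have "[E1 * (E1 * X^2 + E2 * Y^2) = E1 * 0] (mod int p)" using H1 by (rule cong_scalar_left)
        then have "[(E1 * X)^2 + E1 * E2 * Y^2 = 0] (mod int p)" by (simp add: power2_eq_square algebra_simps)
        then have "[(E1 * X)^2 = - (E1 * E2 * Y^2)] (mod int p)"
          by (simp add: cong_iff_dvd_diff)
        then have "qr p (Y^2 * (- (E1 * E2)))" unfolding qr_def by (auto simp: ac_simps)
        then have "qr p (- (E1 * E2))"
          using qr_cancel[OF pr _ qr_sq] nY by (metis pr power2_eq_square p_ndvd_mult)
        then show "n > a \<and> qr p (- (E1 * E2))" using a0 n1' by simp
      qed
      then show ?thesis using a0 by (simp add: ILC_def)
    qed
  next
    case True
    then obtain X' where X': "X = int p * X'" by blast
    have EX: "E1 * X^2 = int p ^ 2 * (E1 * X'^2)" unfolding X' by (simp add: power2_eq_square)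
    show ?thesis
    proof (cases "a \<ge> 2")
      case True
      then obtain a' where a': "a = a' + 2" by (metis add.commute le_add_diff_inverse)
      have pa: "int p ^ a = int p ^ 2 * int p ^ a'" unfolding a' by (simp only: power_add mult.commute)
      show ?thesis
      proof (rule red[of a' X' Y])
        show "a' = a \<or> a' + 2 = a" using a' by simp
        show "E1 * X\<^sup>2 + int p ^ a * E2 * Y\<^sup>2 = int p ^ 2 * (E1 * X'\<^sup>2 + int p ^ a' * E2 * Y\<^sup>2)"
          by (simp only: pa EX distrib_left mult.assoc)
      qed
    next
      case False
      show ?thesis
      proof (cases "int p dvd Y")
        case True
        then obtain Y' where Y': "Y = int p * Y'" by blast
        have EY: "Y^2 = int p ^ 2 * Y'^2" unfolding Y' by (simp add: power_mult_distrib)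
        show ?thesis
        proof (rule red[of a X' Y'])
          show "a = a \<or> a + 2 = a" by simp
          show "E1 * X\<^sup>2 + int p ^ a * E2 * Y\<^sup>2 = int p ^ 2 * (E1 * X'\<^sup>2 + int p ^ a * E2 * Y'\<^sup>2)"
            unfolding EX EY by (simp add: algebra_simps)
        qed
      next
        case nY: False
        have nY2: "\<not> int p dvd E2 * Y^2" by (rule ndvd_sq_mult[OF pr n2 nY])
        have dX: "[E1 * X^2 = 0] (mod int p ^ 2)" unfolding EX by (simp add: cong_0_iff)
        show ?thesis
        proof (cases "a = 0")
          case True
          have "n = 0"
          proof (rule ccontr)
            assume "n \<noteq> 0"
            then have "[E1 * X^2 + int p ^ a * E2 * Y^2 = 0] (mod int p)" using Hp dpn cong_trans by simp
            moreover have "[E1 * X^2 = 0] (mod int p)" using dX by (rule cong_dvd_modulus) simp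
            ultimately have "[int p ^ a * E2 * Y^2 = 0] (mod int p)"
              using cong_drop0[of "E1 * X^2" "int p" "int p ^ a * E2 * Y^2" 0] by (simp add: add.commute)
            then show False using True nY2 by (simp add: cong_0_iff)
          qed
          then show ?thesis using True by (simp add: ILC_def)
        next
          case False
          then have a1: "a = 1" using \<open>\<not> a \<ge> 2\<close> by simp
          have n1: "n = 1"
          proof (rule ccontr)
            assume nn: "n \<noteq> 1"
            show False
            proof (cases "n = 0")
              case True
              have "[int p * E2 * Y^2 = 0] (mod int p)" by (simp add: cong_0_iff)
              moreover have "[E1 * X^2 = 0] (mod int p)" using dX by (rule cong_dvd_modulus) simp
              ultimately have "[E1 * X^2 + int p * E2 * Y^2 = 0] (mod int p)"
                using cong_add by fastforce
              then have "[w = 0] (mod int p)" using Hp a1 True by (metis cong_sym cong_trans power_0 mult_1 power_one_right)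
              then show False using nw by (simp add: cong_0_iff)
            next
              case False
              then have "n \<ge> 2" using nn by simp
              have "[E1 * X^2 + int p ^ a * E2 * Y^2 = int p ^ n * w] (mod int p ^ 2)"
                using H by (rule cong_dvd_modulus) (use \<open>n \<ge> 2\<close> in \<open>simp add: le_imp_power_dvd\<close>)
              moreover have "[int p ^ n * w = 0] (mod int p ^ 2)"
                using \<open>n \<ge> 2\<close> by (simp add: cong_0_iff le_imp_power_dvd)
              ultimately have "[E1 * X^2 + int p ^ a * E2 * Y^2 = 0] (mod int p ^ 2)" using cong_trans by blast
              then have "[int p * E2 * Y^2 = 0] (mod int p ^ 2)"
                using cong_drop0[of "E1 * X^2" "int p ^ 2" "int p * E2 * Y^2" 0] dX a1 by (simp add: add.commute)
              then have "int p * int p dvd int p * (E2 * Y^2)" by (simp add: cong_0_iff power2_eq_square ac_simps)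
              then have "int p dvd E2 * Y^2" using pr by (simp add: prime_gt_0_nat)
              then show False using nY2 by simp
            qed
          qed
          have "[E1 * X^2 + int p * E2 * Y^2 = int p * w] (mod int p ^ 2)" using H a1 n1 by (simp add: power2_eq_square)
          then have "[int p * E2 * Y^2 = int p * w] (mod int p ^ 2)"
            using cong_drop0[of "E1 * X^2" "int p ^ 2" "int p * E2 * Y^2"] dX by (simp add: add.commute)
          then have c2: "[int p * (E2 * Y^2) = int p * w] (mod int p * int p)" by (simp only: power2_eq_square mult.assoc)
          have p00: "int p \<noteq> 0" using pr by (simp add: prime_gt_0_nat)
          have "[E2 * Y^2 = w] (mod int p)" by (rule cong_cancel_scale2[OF p00 c2])
          then have "[(E2 * Y)^2 = w * E2] (mod int p)"
          proof -
            have "(E2 * Y)^2 = E2 * Y^2 * E2" by (simp add: power2_eq_square)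
            then show ?thesis using cong_scalar_right[OF \<open>[E2 * Y^2 = w] (mod int p)\<close>, of E2] by simp
          qed
          then have "qr p (w * E2)" unfolding qr_def by blast
          then show ?thesis using a1 n1 unfolding ILC_def by simp
        qed
      qed
    qed
  qed
qed


definition tgt :: "nat \<Rightarrow> (nat \<Rightarrow> int) \<Rightarrow> nat \<Rightarrow> (nat \<Rightarrow> int)" where
  "tgt p s u = zp_mult p s (zp_of_int p (int p ^ (2*u)))"

lemma nu_s_tgt: "nu_s p as s = zp_ord p (tgt p s (LEAST u. zp_rep p as (tgt p s u)))"
  unfolding nu_s_def tgt_def Let_def ..

lemma tgt_cong:
  assumes "\<And>n. [s n = int p ^ ko * D n] (mod int p ^ n)"
  shows "[tgt p s u n = int p ^ (2*u + ko) * D n] (mod int p ^ n)"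
proof -
  have "[tgt p s u n = s n * int p ^ (2*u)] (mod int p ^ n)"
    unfolding tgt_def zp_mult_def zp_of_int_def by (simp add: cong_def mod_mult_right_eq)
  also have "[s n * int p ^ (2*u) = (int p ^ ko * D n) * int p ^ (2*u)] (mod int p ^ n)"
    using assms by (rule cong_scalar_right)
  also have "(int p ^ ko * D n) * int p ^ (2*u) = int p ^ (2*u + ko) * D n"
    by (simp add: power_add ac_simps)
  finally show ?thesis .
qed

lemma tgt_zp: "prime p \<Longrightarrow> s \<in> zp p \<Longrightarrow> tgt p s u \<in> zp p"
  unfolding tgt_def by (intro zp_mult_zp zp_of_int_zp) (simp_all add: prime_gt_0_nat)

lemma zp_val_zero:
  assumes "x \<in> zp p" "[x n = z] (mod int p ^ n)"
  shows "x n = 0 \<longleftrightarrow> int p ^ n dvd z"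
  using assms zp_mod_self[OF assms(1), of n]
  by (metis cong_0_iff cong_def mod_0)

lemma zp_ord_eq:
  assumes pr: "prime p" and x: "x \<in> zp p" and c: "\<And>n. [x n = int p ^ N * D n] (mod int p ^ n)"
    and nd: "\<And>m. m \<ge> 1 \<Longrightarrow> \<not> int p dvd D m"
  shows "zp_ord p x = N"
proof -
  have p0: "int p > 0" using pr prime_gt_0_nat by simp
  have key: "x (Suc m) \<noteq> 0 \<longleftrightarrow> N \<le> m" for m
  proof
    assume "x (Suc m) \<noteq> 0"
    then have "\<not> int p ^ Suc m dvd int p ^ N * D (Suc m)" using zp_val_zero[OF x c] by blast
    then show "N \<le> m" by (metis dvd_mult2 le_imp_power_dvd not_less_eq_eq)
  next
    assume "N \<le> m"
    show "x (Suc m) \<noteq> 0"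
    proof
      assume "x (Suc m) = 0"
      then have "int p ^ Suc m dvd int p ^ N * D (Suc m)" using zp_val_zero[OF x c] by blast
      moreover have "int p ^ Suc N dvd int p ^ Suc m" using \<open>N \<le> m\<close> by (intro le_imp_power_dvd) simp
      ultimately have "int p ^ N * int p dvd int p ^ N * D (Suc m)" by (metis dvd_trans power_Suc2)
      then have "int p dvd D (Suc m)" using p0 by simp
      then show False using nd[of "Suc m"] by simp
    qed
  qed
  show ?thesis unfolding zp_ord_def key by (rule Least_equality) auto
qed

lemma tgt_ord:
  assumes pr: "prime p" and s: "s \<in> zp p" and c: "\<And>n. [s n = int p ^ ko * D n] (mod int p ^ n)"
    and nd: "\<And>m. m \<ge> 1 \<Longrightarrow> \<not> int p dvd D m"
  shows "zp_ord p (tgt p s u) = 2*u + ko"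
  by (rule zp_ord_eq[OF pr tgt_zp[OF pr s] tgt_cong[OF c] nd])

lemma tgt_high:
  assumes pr: "prime p" and s: "s \<in> zp p" and c: "\<And>n. [s n = int p ^ ko * D n] (mod int p ^ n)"
    and T: "T \<le> 2*u + ko"
  shows "tgt p s u T = 0"
proof -
  have "int p ^ T dvd int p ^ (2*u + ko) * D T" using T by (simp add: le_imp_power_dvd)
  then show ?thesis using zp_val_zero[OF tgt_zp[OF pr s] tgt_cong[OF c]] by blast
qed

lemma nu_s_upper:
  assumes pr: "prime p" and s: "s \<in> zp p" and c: "\<And>n. [s n = int p ^ ko * D n] (mod int p ^ n)"
    and nd: "\<And>m. m \<ge> 1 \<Longrightarrow> \<not> int p dvd D m"
    and r: "zp_rep p as (tgt p s u)"
  shows "nu_s p as s \<le> 2*u + ko"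
proof -
  have "(LEAST u. zp_rep p as (tgt p s u)) \<le> u" using r by (rule Least_le)
  moreover have "zp_ord p (tgt p s (LEAST u. zp_rep p as (tgt p s u))) = 2 * (LEAST u. zp_rep p as (tgt p s u)) + ko"
    by (rule tgt_ord[OF pr s c nd])
  ultimately show ?thesis unfolding nu_s_tgt by simp
qed

lemma nu_s_witness:
  assumes pr: "prime p" and s: "s \<in> zp p" and c: "\<And>n. [s n = int p ^ ko * D n] (mod int p ^ n)"
    and nd: "\<And>m. m \<ge> 1 \<Longrightarrow> \<not> int p dvd D m"
    and r: "zp_rep p as (tgt p s u)"
  shows "\<exists>v. zp_rep p as (tgt p s v) \<and> nu_s p as s = 2*v + ko"
proof -
  have "zp_rep p as (tgt p s (LEAST u. zp_rep p as (tgt p s u)))" using r by (rule LeastI)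
  moreover have "zp_ord p (tgt p s (LEAST u. zp_rep p as (tgt p s u))) = 2 * (LEAST u. zp_rep p as (tgt p s u)) + ko"
    by (rule tgt_ord[OF pr s c nd])
  ultimately show ?thesis unfolding nu_s_tgt by blast
qed

lemma nu_s_bound:
  assumes pr: "prime p" and s: "s \<in> zp p" and c: "\<And>n. [s n = int p ^ ko * D n] (mod int p ^ n)"
    and nd: "\<And>m. m \<ge> 1 \<Longrightarrow> \<not> int p dvd D m" and ko: "ko \<le> 1"
    and U: "\<And>y. y \<in> zp p \<Longrightarrow> y B = 0 \<Longrightarrow> zp_rep p as y"
  shows "nu_s p as s \<le> B + 1"
proof -
  define u where "u = (B + 1 - ko) div 2"
  have "B \<le> 2*u + ko" "2*u + ko \<le> B + 1" unfolding u_def using ko by auto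
  have "zp_rep p as (tgt p s u)"
    by (rule U[OF tgt_zp[OF pr s] tgt_high[OF pr s c \<open>B \<le> 2*u + ko\<close>]])
  from nu_s_upper[OF pr s c nd this] show ?thesis using \<open>2*u + ko \<le> B + 1\<close> by simp
qed

lemma comb:
  fixes f :: "'a \<Rightarrow> nat"
  assumes "finite S" "s1 \<in> S" "s2 \<in> S" "s1 \<noteq> s2" "f s1 \<ge> B" "f s2 \<ge> B" "\<And>s. s \<in> S \<Longrightarrow> f s \<le> B + 1"
  shows "Max (f ` S) \<le> Max (f ` (S - {s0})) + 1"
proof -
  have "Max (f ` S) \<le> B + 1" using assms by (subst Max_le_iff) auto
  moreover obtain t where t: "t \<in> S - {s0}" "f t \<ge> B" using assms by (cases "s1 = s0") auto
  then have "B \<le> Max (f ` (S - {s0}))"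
    using assms(1) by (meson Max_ge finite_Diff finite_imageI imageI order_trans)
  ultimately show ?thesis by simp
qed


lemma zp_zero_zp: "p > 0 \<Longrightarrow> zp_zero \<in> zp p"
  unfolding zp_def zp_zero_def by simp

lemma zp_cong1: "x \<in> zp p \<Longrightarrow> m \<ge> 1 \<Longrightarrow> [x m = x 1] (mod int p)"
  using zp_cong[of x p 1 m] by simp

lemma sum_prefix:
  fixes g :: "nat \<Rightarrow> int"
  assumes "m \<le> k" "\<And>i. m \<le> i \<Longrightarrow> i < k \<Longrightarrow> g i = 0"
  shows "(\<Sum>i<k. g i) = (\<Sum>i<m. g i)"
  using assms
proof (induction k)
  case 0 then show ?case by simp
next
  case (Suc k)
  show ?case
  proof (cases "m = Suc k")
    case True then show ?thesis by simp
  next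
    case False
    then have "m \<le> k" using Suc by simp
    then show ?thesis using Suc by simp
  qed
qed

locale L26 =
  fixes p k :: nat and eps :: "nat \<Rightarrow> (nat \<Rightarrow> int)" and e :: "nat \<Rightarrow> nat" and d :: "nat \<Rightarrow> int"
  assumes pr: "prime p" and od: "odd p" and k4: "k \<ge> 4"
    and dn: "zp_nonsquare_unit p d"
    and eu: "\<And>i. i < k \<Longrightarrow> zp_unit p (eps i)"
    and e0: "e 0 = 0"
    and emono: "\<And>i j. i \<le> j \<Longrightarrow> j < k \<Longrightarrow> e i \<le> e j"
    and iso: "zp_isotropic p (map (\<lambda>i. zp_mult p (zp_of_int p (int p ^ e i)) (eps i)) [0..<3])"
begin

abbreviation A where "A i \<equiv> zp_mult p (zp_of_int p (int p ^ e i)) (eps i)"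
abbreviation as where "as \<equiv> map A [0..<k]"

lemma p0: "p > 0" using pr prime_gt_0_nat by blast
lemma epsz: "i < k \<Longrightarrow> eps i \<in> zp p" using eu by (simp add: zp_unit_def)
lemma eps1: "i < k \<Longrightarrow> eps i 1 \<noteq> 0" using eu by (simp add: zp_unit_def)
lemma eps_nd: "i < k \<Longrightarrow> m \<ge> 1 \<Longrightarrow> \<not> int p dvd eps i m"
  using unit_ndvd[OF epsz eps1] by blast
lemma Az: "i < k \<Longrightarrow> A i \<in> zp p"
  using zp_mult_zp[OF p0 zp_of_int_zp[OF p0] epsz] by blast
lemma asz: "set as \<subseteq> zp p" using Az by auto
lemma Acong: "[A i n = int p ^ e i * eps i n] (mod int p ^ n)"
  by (simp add: zp_mult_def zp_of_int_def cong_def mod_mult_left_eq)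
lemma dz: "d \<in> zp p" and d1: "d 1 \<noteq> 0" and dns: "\<not> zp_square p d"
  using dn by (auto simp: zp_nonsquare_unit_def zp_unit_def)

lemma U: assumes y: "y \<in> zp p" and yT: "y (e 2) = 0" shows "zp_rep p as y"
proof -
  let ?bs = "map A [0..<3]"
  have bz: "set ?bs \<subseteq> zp p" using Az k4 by auto
  obtain vs j where lv: "length vs = length ?bs" and vz: "set vs \<subseteq> zp p"
    and vi: "\<And>n. [(\<Sum>i<length ?bs. (?bs!i) n * ((vs!i) n)^2) = 0] (mod int p ^ n)"
    and j: "j < length ?bs" "(vs!j) 1 \<noteq> 0"
    using prim_iso[OF pr bz iso] by blast
  define ws where "ws = vs @ replicate (k - 3) zp_zero"
  have lw: "length ws = length as" unfolding ws_def using lv k4 by simp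
  have wz: "set ws \<subseteq> zp p" unfolding ws_def using vz zp_zero_zp[OF p0] by auto
  have wsi: "ws ! i = vs ! i" if "i < 3" for i using that lv unfolding ws_def by (simp add: nth_append)
  have wsz: "ws ! i = zp_zero" if "3 \<le> i" "i < k" for i
    using that lv unfolding ws_def by (simp add: nth_append)
  have iso': "[(\<Sum>i<length as. (as!i) n * ((ws!i) n)^2) = 0] (mod int p ^ n)" for n
  proof -
    have "(\<Sum>i<length as. (as!i) n * ((ws!i) n)^2) = (\<Sum>i<3. (as!i) n * ((ws!i) n)^2)"
      by (rule sum_prefix) (use k4 wsz in \<open>auto simp: zp_zero_def\<close>)
    also have "\<dots> = (\<Sum>i<length ?bs. (?bs!i) n * ((vs!i) n)^2)"
      using k4 wsi by (intro sum.cong) auto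
    finally show ?thesis using vi by simp
  qed
  have j3: "j < 3" using j by simp
  have "e j \<le> e 2" using emono[of j 2] j3 k4 by simp
  then have yej: "y (e j) = 0" using zp_coh[OF y \<open>e j \<le> e 2\<close>] yT by simp
  show ?thesis
  proof (rule rep_lin[OF pr od lw wz asz iso'])
    show "j < length as" using j3 k4 by simp
    show "as ! j = zp_mult p (zp_of_int p (int p ^ e j)) (eps j)" using j3 k4 by simp
    show "zp_unit p (eps j)" using eu j3 k4 by simp
    show "(ws ! j) 1 \<noteq> 0" using wsi[OF j3] j by simp
  qed (use y yej in auto)
qed

lemma lower:
  assumes s: "s \<in> zp p" and c: "\<And>n. [s n = int p ^ ko * D n] (mod int p ^ n)"
    and ndD: "\<And>m. m \<ge> 1 \<Longrightarrow> \<not> int p dvd D m"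
    and r: "zp_rep p as (tgt p s u)" and N: "2*u + ko < e 2"
  shows "ILC p (eps 0 (Suc (2*u + ko))) (eps 1 (Suc (2*u + ko))) (D (Suc (2*u + ko))) (e 1) (2*u + ko)"
proof -
  define N where "N = 2*u + ko"
  define m where "m = Suc N"
  obtain xs where lx: "length xs = length as" and xz: "set xs \<subseteq> zp p" and q: "qf p as xs = tgt p s u"
    using r unfolding zp_rep_def by blast
  let ?X = "\<lambda>i. (xs!i) m"
  have Q: "[(\<Sum>i<k. A i m * (?X i)^2) = tgt p s u m] (mod int p ^ m)"
  proof -
    have "qf p as xs m = tgt p s u m" using q by simp
    then have "(\<Sum>i<k. (as!i) m * (?X i)^2) mod int p ^ m = tgt p s u m" unfolding qf_def by simp
    moreover have "(\<Sum>i<k. (as!i) m * (?X i)^2) = (\<Sum>i<k. A i m * (?X i)^2)" by (intro sum.cong) auto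
    ultimately show ?thesis by (simp add: cong_def zp_mod_self[OF tgt_zp[OF pr s]])
  qed
  define g where "g i = (if i = 0 then eps 0 m * (?X 0)^2 else if i = 1 then int p ^ e 1 * eps 1 m * (?X 1)^2 else 0)" for i :: nat
  have G: "[(\<Sum>i<k. A i m * (?X i)^2) = (\<Sum>i<k. g i)] (mod int p ^ m)"
  proof (rule cong_sum)
    fix i assume i: "i \<in> {..<k}"
    have a: "[A i m * (?X i)^2 = int p ^ e i * eps i m * (?X i)^2] (mod int p ^ m)"
      using Acong by (rule cong_scalar_right)
    show "[A i m * (?X i)^2 = g i] (mod int p ^ m)"
    proof (cases "i < 2")
      case True
      then show ?thesis using a e0 unfolding g_def by (cases i) auto
    next
      case False
      have "e 2 \<le> e i" using emono[of 2 i] False i by simp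
      then have "m \<le> e i" using N unfolding m_def N_def by simp
      then have "int p ^ m dvd int p ^ e i * eps i m * (?X i)^2" by (simp add: le_imp_power_dvd)
      then have "[int p ^ e i * eps i m * (?X i)^2 = 0] (mod int p ^ m)" by (simp add: cong_0_iff)
      then show ?thesis using a False unfolding g_def by (simp add: cong_trans)
    qed
  qed
  have Sg: "(\<Sum>i<k. g i) = g 0 + g 1"
  proof -
    have "(\<Sum>i<k. g i) = (\<Sum>i<2. g i)" by (rule sum_prefix) (use k4 in \<open>auto simp: g_def\<close>)
    also have "\<dots> = g 0 + g 1" by (simp add: numeral_2_eq_2)
    finally show ?thesis .
  qed
  have T: "[tgt p s u m = int p ^ N * D m] (mod int p ^ m)" unfolding N_def by (rule tgt_cong[OF c])
  have "[g 0 + g 1 = (\<Sum>i<k. A i m * (?X i)^2)] (mod int p ^ m)" using G unfolding Sg by (rule cong_sym)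
  also note Q
  also note T
  finally have "[g 0 + g 1 = int p ^ N * D m] (mod int p ^ m)" .
  moreover have "g 0 + g 1 = eps 0 m * (?X 0)^2 + int p ^ e 1 * eps 1 m * (?X 1)^2" by (simp add: g_def)
  ultimately have "[eps 0 m * (?X 0)^2 + int p ^ e 1 * eps 1 m * (?X 1)^2 = int p ^ N * D m] (mod int p ^ Suc N)"
    unfolding m_def by simp
  from IL[OF pr eps_nd eps_nd ndD this] k4 show ?thesis unfolding N_def m_def by simp
qed

lemma ILC_lvl:
  assumes "ILC p E1 E2 w a N" "[E1 = E1'] (mod int p)" "[E2 = E2'] (mod int p)" "[w = w'] (mod int p)"
  shows "ILC p E1' E2' w' a N"
proof -
  have "qr p (w * E1) \<Longrightarrow> qr p (w' * E1')" by (rule qr_cong[OF cong_mult[OF assms(4) assms(2)]])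
  moreover have "qr p (w * E2) \<Longrightarrow> qr p (w' * E2')" by (rule qr_cong[OF cong_mult[OF assms(4) assms(3)]])
  moreover have "qr p (-(E1*E2)) \<Longrightarrow> qr p (-(E1'*E2'))"
    by (rule qr_cong[OF cong_uminus[OF cong_mult[OF assms(2) assms(3)]]])
  ultimately show ?thesis using assms(1) unfolding ILC_def by blast
qed

lemma witness:
  assumes s: "s \<in> zp p" and c: "\<And>n. [s n = int p ^ ko * D n] (mod int p ^ n)"
    and ndD: "\<And>m. m \<ge> 1 \<Longrightarrow> \<not> int p dvd D m" and ko: "ko \<le> 1"
  shows "\<exists>u. zp_rep p as (tgt p s u) \<and> nu_s p as s = 2*u + ko"
proof -
  define u where "u = (e 2 + 1 - ko) div 2"
  have "e 2 \<le> 2*u + ko" unfolding u_def using ko by auto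
  have "zp_rep p as (tgt p s u)"
    by (rule U[OF tgt_zp[OF pr s] tgt_high[OF pr s c \<open>e 2 \<le> 2*u + ko\<close>]])
  from nu_s_witness[OF pr s c ndD this] show ?thesis .
qed

lemma bound:
  assumes s: "s \<in> zp p" and c: "\<And>n. [s n = int p ^ ko * D n] (mod int p ^ n)"
    and ndD: "\<And>m. m \<ge> 1 \<Longrightarrow> \<not> int p dvd D m" and ko: "ko \<le> 1"
  shows "nu_s p as s \<le> e 2 + 1"
  by (rule nu_s_bound[OF pr s c ndD ko U])

lemma lowILC:
  assumes s: "s \<in> zp p" and c: "\<And>n. [s n = int p ^ ko * D n] (mod int p ^ n)"
    and ndD: "\<And>m. m \<ge> 1 \<Longrightarrow> \<not> int p dvd D m" and ko: "ko \<le> 1"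
    and Dc: "\<And>m. m \<ge> 1 \<Longrightarrow> [D m = D 1] (mod int p)"
    and lt: "nu_s p as s < e 2"
  shows "\<exists>u. nu_s p as s = 2*u + ko \<and> ILC p (eps 0 1) (eps 1 1) (D 1) (e 1) (nu_s p as s)"
proof -
  obtain u where r: "zp_rep p as (tgt p s u)" and nu: "nu_s p as s = 2*u + ko"
    using witness[OF s c ndD ko] by blast
  have "ILC p (eps 0 (Suc (2*u + ko))) (eps 1 (Suc (2*u + ko))) (D (Suc (2*u + ko))) (e 1) (2*u + ko)"
  proof (rule lower[OF s c ndD r])
    show "2*u + ko < e 2" using lt nu by simp
  qed
  then have "ILC p (eps 0 1) (eps 1 1) (D 1) (e 1) (2*u + ko)"
  proof (rule ILC_lvl)
    show "[eps 0 (Suc (2*u + ko)) = eps 0 1] (mod int p)" using k4 by (intro zp_cong1 epsz) simp_all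
    show "[eps 1 (Suc (2*u + ko)) = eps 1 1] (mod int p)" using k4 by (intro zp_cong1 epsz) simp_all
    show "[D (Suc (2*u + ko)) = D 1] (mod int p)" by (rule Dc) simp
  qed
  then show ?thesis using nu by auto
qed

abbreviation one where "one \<equiv> zp_of_int p 1"
abbreviation PP where "PP \<equiv> zp_of_int p (int p)"
abbreviation Pd where "Pd \<equiv> zp_mult p PP d"

lemma p_ndvd1: "\<not> int p dvd 1"
  using pr by (metis of_nat_1 int_dvd_int_iff nat_dvd_1_iff_1 not_prime_1)

lemma one_z: "one \<in> zp p" and one_c: "[one n = int p ^ 0 * 1] (mod int p ^ n)"
  using zp_of_int_zp[OF p0] by (auto simp: zp_of_int_def cong_def)
lemma d_c: "[d n = int p ^ 0 * d n] (mod int p ^ n)" by simp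
lemma P_z: "PP \<in> zp p" and P_c: "[PP n = int p ^ 1 * 1] (mod int p ^ n)"
  using zp_of_int_zp[OF p0] by (auto simp: zp_of_int_def cong_def)
lemma Pd_z: "Pd \<in> zp p" using zp_mult_zp[OF p0 P_z dz] .
lemma Pd_c: "[Pd n = int p ^ 1 * d n] (mod int p ^ n)"
  by (simp add: zp_mult_def zp_of_int_def cong_def mod_mult_left_eq)
lemma d_nd: "m \<ge> 1 \<Longrightarrow> \<not> int p dvd d m" using unit_ndvd[OF dz d1] by blast
lemma d_lvl: "m \<ge> 1 \<Longrightarrow> [d m = d 1] (mod int p)" using zp_cong1[OF dz] by blast

lemma dnq: "\<not> qr p (d 1)"
proof
  assume "qr p (d 1)"
  then obtain r1 where r1: "[r1^2 = d 1] (mod int p)" unfolding qr_def by blast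
  have "\<not> int p dvd r1"
  proof
    assume "int p dvd r1"
    then have "int p dvd r1^2" by (simp add: power2_eq_square)
    then have "int p dvd d 1" using r1 cong_dvd_iff by blast
    then show False using d_nd[of 1] by simp
  qed
  from zp_sqrt[OF pr od dz r1 this] obtain r where rz: "r \<in> zp p" and rr: "\<And>n. [r n ^ 2 = d n] (mod int p ^ n)"
    by blast
  have "d = zp_mult p r r"
    by (rule ext) (use rr zp_mod_self[OF dz] in \<open>simp add: zp_mult_def cong_def power2_eq_square\<close>)
  then show False using dns rz unfolding zp_square_def by blast
qed

lemma P_ne_Pd: "PP \<noteq> Pd"
proof
  assume a: "PP = Pd"
  have "[int p * 1 = int p * d 2] (mod int p * int p)"
    using fun_cong[OF a, of 2] by (simp add: zp_mult_def zp_of_int_def cong_def power2_eq_square mod_mult_left_eq)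
  moreover have "int p \<noteq> 0" using p0 by simp
  ultimately have "[1 = d 2] (mod int p)" using cong_cancel_scale2 by blast
  then have "[1^2 = d 1] (mod int p)" using d_lvl[of 2] cong_trans by simp
  then show False using dnq unfolding qr_def by blast
qed

lemma unit_ne: "x 1 \<noteq> 0 \<Longrightarrow> y 1 = 0 \<Longrightarrow> x \<noteq> y" by auto
lemma one1: "one 1 \<noteq> 0"
proof -
  have "int p > 1" using prime_gt_1_nat[OF pr] by simp
  then show ?thesis by (simp add: zp_of_int_def)
qed
lemma P1: "PP 1 = 0" by (simp add: zp_of_int_def)
lemma Pd1: "Pd 1 = 0" by (simp add: zp_mult_def zp_of_int_def)

lemma Mrep:
  assumes q: "qr p (-(eps 0 1 * eps 1 1))" and ev: "even (e 1)"
    and y: "y \<in> zp p" and ye: "y (e 1) = 0"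
  shows "zp_rep p as y"
proof -
  have e0z: "eps 0 \<in> zp p" "eps 1 \<in> zp p" using epsz k4 by auto
  obtain I where Iz: "I \<in> zp p" and I: "\<And>n. [eps 0 n * I n = 1] (mod int p ^ n)"
    using zp_inverse[OF pr e0z(1) eps1[of 0]] k4 by auto
  define c where "c n = (- eps 1 n * I n) mod int p ^ n" for n
  have cz: "c \<in> zp p" unfolding c_def
    by (intro mk_zp[OF _ p0] cohs_mult cohs_uminus zp_cohs e0z Iz)
  have cc: "[c n = - eps 1 n * I n] (mod int p ^ n)" for n by (simp add: c_def cong_def)
  have I1: "[eps 0 1 * I 1 = 1] (mod int p)" using I[of 1] by simp
  have qc: "qr p (c 1)"
  proof -
    have "qr p (-(eps 0 1 * eps 1 1) * (I 1)^2)" using qr_mult[OF q qr_sq] .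
    moreover have "-(eps 0 1 * eps 1 1) * (I 1)^2 = (- eps 1 1 * I 1) * (eps 0 1 * I 1)"
      by (simp add: power2_eq_square)
    moreover have "[(- eps 1 1 * I 1) * (eps 0 1 * I 1) = (- eps 1 1 * I 1) * 1] (mod int p)"
      using I1 by (rule cong_scalar_left)
    moreover have "[- eps 1 1 * I 1 = c 1] (mod int p)" using cc[of 1] by (simp add: cong_sym)
    ultimately show ?thesis using qr_cong cong_trans by (metis mult_1_right)
  qed
  then obtain r1 where r1: "[r1^2 = c 1] (mod int p)" unfolding qr_def by blast
  have nr1: "\<not> int p dvd r1"
  proof
    assume "int p dvd r1"
    then have "int p dvd r1^2" by (simp add: power2_eq_square)
    then have "int p dvd c 1" using r1 cong_dvd_iff by blast
    then have "int p dvd - eps 1 1 * I 1" using cc[of 1] cong_dvd_iff[of "c 1" "- eps 1 1 * I 1" "int p"] by simp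
    then have "int p dvd eps 1 1 * I 1" by simp
    then have "int p dvd eps 0 1 * (eps 1 1 * I 1)" by simp
    then have "int p dvd eps 1 1 * (eps 0 1 * I 1)" by (simp add: ac_simps)
    moreover have "\<not> int p dvd eps 0 1 * I 1" using I1 cong_dvd_iff p_ndvd1 by blast
    moreover have "\<not> int p dvd eps 1 1" using eps_nd[of 1 1] k4 by simp
    ultimately show False using p_ndvd_mult[OF pr] by blast
  qed
  obtain r where rz: "r \<in> zp p" and rr: "\<And>n. [r n ^ 2 = c n] (mod int p ^ n)"
    using zp_sqrt[OF pr od cz r1 nr1] by blast
  obtain h where h: "e 1 = 2 * h" using ev by blast
  define V0 where "V0 n = (int p ^ h * r n) mod int p ^ n" for n
  have V0z: "V0 \<in> zp p" unfolding V0_def by (intro mk_zp[OF _ p0] cohs_mult cohs_const zp_cohs rz)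
  define vs where "vs = V0 # one # replicate (k - 2) zp_zero"
  have lv: "length vs = length as" using k4 by (simp add: vs_def)
  have vz: "set vs \<subseteq> zp p" using V0z one_z zp_zero_zp[OF p0] by (auto simp: vs_def)
  have iso': "[(\<Sum>i<length as. (as!i) n * ((vs!i) n)^2) = 0] (mod int p ^ n)" for n
  proof -
    have "(\<Sum>i<length as. (as!i) n * ((vs!i) n)^2) = (\<Sum>i<2. (as!i) n * ((vs!i) n)^2)"
      by (rule sum_prefix) (use k4 in \<open>auto simp: vs_def zp_zero_def nth_Cons'\<close>)
    also have "\<dots> = A 0 n * (V0 n)^2 + A 1 n * (one n)^2"
      using k4 by (simp add: numeral_2_eq_2 vs_def)
    finally have S: "(\<Sum>i<length as. (as!i) n * ((vs!i) n)^2) = A 0 n * (V0 n)^2 + A 1 n * (one n)^2" .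
    have t0: "[A 0 n * (V0 n)^2 = int p ^ e 1 * (eps 0 n * c n)] (mod int p ^ n)"
    proof -
      have "[A 0 n * (V0 n)^2 = (int p ^ e 0 * eps 0 n) * (int p ^ h * r n)^2] (mod int p ^ n)"
        using Acong[of 0 n] by (intro cong_mult) (simp_all add: V0_def cong_def power_mod)
      also have "(int p ^ e 0 * eps 0 n) * (int p ^ h * r n)^2 = int p ^ e 1 * (eps 0 n * r n ^ 2)"
        using e0 h by (simp add: power_mult_distrib power_mult[symmetric] ac_simps)
      also have "[\<dots> = int p ^ e 1 * (eps 0 n * c n)] (mod int p ^ n)"
        using rr[of n] by (intro cong_scalar_left)
      finally show ?thesis .
    qed
    have t1: "[A 1 n * (one n)^2 = int p ^ e 1 * eps 1 n] (mod int p ^ n)"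
    proof -
      have "[A 1 n * (one n)^2 = (int p ^ e 1 * eps 1 n) * 1^2] (mod int p ^ n)"
        using Acong[of 1 n] by (intro cong_mult) (simp_all add: zp_of_int_def cong_def power_mod)
      then show ?thesis by simp
    qed
    have "[int p ^ e 1 * (eps 0 n * c n) + int p ^ e 1 * eps 1 n
         = int p ^ e 1 * (eps 0 n * (- eps 1 n * I n)) + int p ^ e 1 * eps 1 n] (mod int p ^ n)"
      by (intro cong_add cong_refl cong_scalar_left cc)
    also have "int p ^ e 1 * (eps 0 n * (- eps 1 n * I n)) + int p ^ e 1 * eps 1 n
        = int p ^ e 1 * eps 1 n * (1 - eps 0 n * I n)" by (simp add: algebra_simps)
    also have "[\<dots> = int p ^ e 1 * eps 1 n * (1 - 1)] (mod int p ^ n)"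
      by (intro cong_scalar_left cong_diff cong_refl I)
    finally have "[int p ^ e 1 * (eps 0 n * c n) + int p ^ e 1 * eps 1 n = 0] (mod int p ^ n)" by simp
    then show ?thesis unfolding S using cong_add[OF t0 t1] cong_trans by blast
  qed
  show ?thesis
  proof (rule rep_lin[OF pr od lv vz asz iso'])
    show "1 < length as" using k4 by simp
    show "as ! 1 = zp_mult p (zp_of_int p (int p ^ e 1)) (eps 1)" using k4 by simp
    show "zp_unit p (eps 1)" using eu k4 by simp
    show "(vs ! 1) 1 \<noteq> 0" using one1 by (simp add: vs_def)
  qed (use y ye in auto)
qed

lemma p_ne1: "p \<noteq> Suc 0" using prime_gt_1_nat[OF pr] by simp
lemma nd1: "m \<ge> 1 \<Longrightarrow> \<not> int p dvd (\<lambda>n. 1) m" using p_ndvd1 by simp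
lemma lvl1: "m \<ge> 1 \<Longrightarrow> [(\<lambda>n. 1::int) m = (\<lambda>n. 1) 1] (mod int p)" by simp

theorem main: "nu p d as \<le> nu' p d as + 1"
proof -
  let ?f = "nu_s p as"
  let ?S = "SC p d"
  let ?T = "e 2"
  let ?a = "e 1"
  let ?E1 = "eps 0 1"
  let ?E2 = "eps 1 1"
  have S_eq: "?S = {one, d, PP, Pd}" by (simp add: SC_def)
  have fin: "finite ?S" by (simp add: S_eq)
  have b_one: "?f one \<le> ?T + 1" by (rule bound[OF one_z one_c]) (simp_all add: p_ndvd1 p_ne1)
  have b_d: "?f d \<le> ?T + 1" by (rule bound[OF dz d_c]) (simp_all add: d_nd)
  have b_P: "?f PP \<le> ?T + 1" by (rule bound[OF P_z P_c]) (simp_all add: p_ndvd1 p_ne1)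
  have b_Pd: "?f Pd \<le> ?T + 1" by (rule bound[OF Pd_z Pd_c]) (simp_all add: d_nd)
  have allb: "\<And>s. s \<in> ?S \<Longrightarrow> ?f s \<le> ?T + 1" using b_one b_d b_P b_Pd S_eq by auto
  have L_one: "\<exists>u. ?f one = 2*u + 0 \<and> ILC p ?E1 ?E2 1 ?a (?f one)" if "?f one < ?T"
    by (rule lowILC[OF one_z one_c _ _ _ that]) (simp_all add: p_ndvd1 p_ne1)
  have L_d: "\<exists>u. ?f d = 2*u + 0 \<and> ILC p ?E1 ?E2 (d 1) ?a (?f d)" if "?f d < ?T"
    by (rule lowILC[OF dz d_c _ _ _ that]) (simp_all add: d_nd d_lvl[simplified])
  have L_P: "\<exists>u. ?f PP = 2*u + 1 \<and> ILC p ?E1 ?E2 1 ?a (?f PP)" if "?f PP < ?T"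
    by (rule lowILC[OF P_z P_c _ _ _ that]) (simp_all add: p_ndvd1 p_ne1)
  have L_Pd: "\<exists>u. ?f Pd = 2*u + 1 \<and> ILC p ?E1 ?E2 (d 1) ?a (?f Pd)" if "?f Pd < ?T"
    by (rule lowILC[OF Pd_z Pd_c _ _ _ that]) (simp_all add: d_nd d_lvl[simplified])
  have nE1: "\<not> int p dvd ?E1" and nE2: "\<not> int p dvd ?E2" using eps_nd k4 by auto
  have goal: "Max (?f ` ?S) \<le> Max (?f ` (?S - {s0})) + 1" for s0
  proof (cases "odd ?a")
    case True
    have c1: "?f one \<ge> ?T \<or> ?f d \<ge> ?T"
    proof (rule ccontr)
      assume "\<not> ?thesis"
      then have "?f one < ?T" "?f d < ?T" by auto
      from L_one[OF this(1)] L_d[OF this(2)] True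
      have "qr p (1 * ?E1)" "qr p (d 1 * ?E1)" unfolding ILC_def by auto
      then have "qr p (?E1 * d 1)" "qr p ?E1" by (simp_all add: mult.commute)
      from qr_cancel[OF pr this nE1] show False using dnq by simp
    qed
    have c2: "?f PP \<ge> ?T \<or> ?f Pd \<ge> ?T"
    proof (rule ccontr)
      assume "\<not> ?thesis"
      then have "?f PP < ?T" "?f Pd < ?T" by auto
      from L_P[OF this(1)] L_Pd[OF this(2)] True
      have "qr p (1 * ?E2)" "qr p (d 1 * ?E2)" unfolding ILC_def by auto
      then have "qr p (?E2 * d 1)" "qr p ?E2" by (simp_all add: mult.commute)
      from qr_cancel[OF pr this nE2] show False using dnq by simp
    qed
    obtain s1 where s1: "s1 \<in> ?S" "s1 1 \<noteq> 0" "?f s1 \<ge> ?T"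
      using c1 one1 d1 S_eq by auto
    obtain s2 where s2: "s2 \<in> ?S" "s2 1 = 0" "?f s2 \<ge> ?T"
      using c2 P1 Pd1 S_eq by auto
    have ne: "s1 \<noteq> s2" using s1(2) s2(2) by auto
    show ?thesis by (rule comb[where f="nu_s p as" and B="e 2", OF fin s1(1) s2(1) ne s1(3) s2(3) allb])
  next
    case False
    show ?thesis
    proof (cases "qr p (-(?E1 * ?E2)) \<and> ?a + 1 < ?T")
      case True
      have Mr: "\<And>y. y \<in> zp p \<Longrightarrow> y ?a = 0 \<Longrightarrow> zp_rep p as y"
        using Mrep True False by blast
      have bP: "?f PP \<ge> ?a + 1"
      proof (cases "?f PP < ?T")
        case True
        from L_P[OF this] False show ?thesis unfolding ILC_def by auto
      qed (use True in auto)
      have bPd: "?f Pd \<ge> ?a + 1"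
      proof (cases "?f Pd < ?T")
        case True
        from L_Pd[OF this] False show ?thesis unfolding ILC_def by auto
      qed (use True in auto)
      have m_one: "?f one \<le> ?a + 1" by (rule nu_s_bound[OF pr one_z one_c _ _ Mr]) (simp_all add: p_ndvd1 p_ne1)
      have m_d: "?f d \<le> ?a + 1" by (rule nu_s_bound[OF pr dz d_c _ _ Mr]) (simp_all add: d_nd)
      have m_P: "?f PP \<le> ?a + 1" by (rule nu_s_bound[OF pr P_z P_c _ _ Mr]) (simp_all add: p_ndvd1 p_ne1)
      have m_Pd: "?f Pd \<le> ?a + 1" by (rule nu_s_bound[OF pr Pd_z Pd_c _ _ Mr]) (simp_all add: d_nd)
      have allb': "\<And>s. s \<in> ?S \<Longrightarrow> ?f s \<le> (?a + 1) + 1" using m_one m_d m_P m_Pd S_eq by auto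
      show ?thesis by (rule comb[where f="nu_s p as" and B="e 1 + 1", OF fin _ _ P_ne_Pd bP bPd allb']) (simp_all add: S_eq)
    next
      case nq: False
      have bP: "?f PP \<ge> ?T"
      proof (rule ccontr)
        assume "\<not> ?thesis"
        then have lt: "?f PP < ?T" by simp
        from L_P[OF lt] False have "?f PP > ?a" "qr p (-(?E1 * ?E2))" unfolding ILC_def by auto
        then show False using nq lt by auto
      qed
      have bPd: "?f Pd \<ge> ?T"
      proof (rule ccontr)
        assume "\<not> ?thesis"
        then have lt: "?f Pd < ?T" by simp
        from L_Pd[OF lt] False have "?f Pd > ?a" "qr p (-(?E1 * ?E2))" unfolding ILC_def by auto
        then show False using nq lt by auto
      qed
      show ?thesis by (rule comb[where f="nu_s p as" and B="e 2", OF fin _ _ P_ne_Pd bP bPd allb]) (simp_all add: S_eq)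
    qed
  qed
  show ?thesis unfolding nu_def nu'_def Let_def by (rule goal)
qed

end

theorem lemma2p6:
  fixes p k :: nat and eps :: "nat \<Rightarrow> (nat \<Rightarrow> int)" and e :: "nat \<Rightarrow> nat"
    and d :: "nat \<Rightarrow> int"
  assumes "prime p" and "odd p" and "k \<ge> 4"
    and "zp_nonsquare_unit p d"
    and "\<And>i. i < k \<Longrightarrow> zp_unit p (eps i)"
    and "e 0 = 0"
    and "\<And>i j. i \<le> j \<Longrightarrow> j < k \<Longrightarrow> e i \<le> e j"
    and "zp_isotropic p (map (\<lambda>i. zp_mult p (zp_of_int p (int p ^ e i)) (eps i)) [0..<3])"
  shows "nu p d (map (\<lambda>i. zp_mult p (zp_of_int p (int p ^ e i)) (eps i)) [0..<k])
         \<le> nu' p d (map (\<lambda>i. zp_mult p (zp_of_int p (int p ^ e i)) (eps i)) [0..<k]) + 1"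
  proof -
  interpret L26 p k eps e d using assms by unfold_locales
  show ?thesis by (rule main)
qed

end
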